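(* In the setting described in the context, for every $k>0$ let $z_i^k$ denote the valuation at iteration $i$ of the $k$-uniform restricted safety strategy-improvement algorithm with input $k$, and let $k'=\max\{k,|M|\}$. If $i\ge0$ is such that $z_i^k=z_{i+1}^k$, then $$z_i^k=\max_{\pi_1\in\Pi_1^{M,k'}}\ \inf_{\pi_2}\Pr^{\pi_1,\pi_2}(\mathrm{Safe}(F))$$ (pointwise), where $\Pi_1^{M,k'}$ is the set of $k'$-uniform memoryless player-1 strategies.
   Context: Concurrent game structure $G=(S,M,\Gamma_1,\Gamma_2,\delta)$: finite states, finite moves $M$, nonempty move sets $\Gamma_i(s)$, $\delta(s,a_1,a_2)\in\mathrm{Distr}(S)$ (simultaneous independent moves), $\mathrm{Dest}(s,a_1,a_2)=\mathrm{supp}\,\delta(s,a_1,a_2)$. Selectors assign to each state a distribution on available moves; $\overline{\xi}$ is the memoryless strategy playing $\xi$. $\mathrm{Safe}(F)$: plays staying in $F$; $\mathrm{val}_1^{\pi_1}(\mathrm{Safe}(F))(s)=\inf_{\pi_2}\Pr_s^{\pi_1,\pi_2}(\mathrm{Safe}(F))$, $\mathrm{val}_1(\mathrm{Safe}(F))=\sup_{\pi_1}\mathrm{val}_1^{\pi_1}$. $T=S\setminus F$, $W_1=\{s:\mathrm{val}_1(\mathrm{Safe}(F))(s)=1\}$; states of $W_1\cup T$ are assumed absorbing. For a valuation $v$: $\mathrm{Pre}_{\xi_1,\xi_2}(v)(s)=\sum_{a,b}\sum_tv(t)\delta(s,a,b)(t)\xi_1(s)(a)\xi_2(s)(b)$,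 $\mathrm{Pre}_{\xi,b}$ with player 2 playing $b$, $\mathrm{Pre}_{1:\xi}(v)(s)=\inf_{\xi_2}\mathrm{Pre}_{\xi,\xi_2}(v)(s)$. A selector at $s\notin T\cup W_1$ is $k$-uniform if all its probabilities are of the form $i/j$, integers $0\le i\le j\le k$; a selector/memoryless strategy is $k$-uniform if it is so at every such $s$. $\mathrm{Pre}_1^k(v)(s)=\max\{\mathrm{Pre}_{1:\xi}(v)(s):\xi\ k\text{-uniform at }s\}$; $\mathrm{OptSel}(v,s,k)$ = $k$-uniform $\xi$ attaining it; $\mathrm{CountOpt}(v,s,\xi,k)=\{b:\mathrm{Pre}_{\xi,b}(v)(s)=\mathrm{Pre}_1^k(v)(s)\}$; $\mathrm{OptSelCount}(v,s,k)$ = pairs $(\mathrm{supp}\,\xi,\mathrm{CountOpt}(v,s,\xi,k))$ for $\xi\in\mathrm{OptSel}(v,s,k)$. $\mathrm{TB}(G,v,F,k)=(\overline{G}^k_v,\overline{F})$: turn-based stochastic game with player-1 states $S$, player-2 states $(s,A,B)$, $(A,B)\in\mathrm{OptSelCount}(v,s,k)$, random states $(s,A,b)$, $b\in B$; edges $s\to(s,A,B)\to(s,A,b)\to t$ for $t\in\bigcup_{a\in A}\mathrm{Dest}(s,a,b)$ (uniform at random states); $\overline{F}$ is $F$ plus auxiliary states with first component in $F$. Almost-sure winning states: those from which player 1 can ensure $\mathrm{Safe}(\overline{F})$ with probability 1. $k$-uniform restricted algorithm (input $k$, using $k'=\max\{k,|M|\}$): $\gamma_0$ uniform on $\Gamma_1(s)$;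 $z_i^k=\mathrm{val}_1^{\overline{\gamma}_i}(\mathrm{Safe}(F))$. At iteration $i$: $I_{k'}=\{s\in S\setminus(W_1\cup T):\mathrm{Pre}_1^{k'}(z_i^k)(s)>z_i^k(s)\}$; if nonempty, $\gamma_{i+1}$ equals $\gamma_i$ outside $I_{k'}$ and on $I_{k'}$ a $k'$-uniform selector attaining $\mathrm{Pre}_1^{k'}(z_i^k)$; otherwise compute $\mathrm{TB}(G,z_i^k,F,k')$, its almost-sure winning set $\overline{A}$ for $\mathrm{Safe}(\overline{F})$ and a pure memoryless almost-sure winning strategy $\overline{\pi}_1$, let $U=(\overline{A}\cap S)\setminus W_1$, and if $U\ne\emptyset$ let $\gamma_{i+1}=\gamma_i$ outside $U$ and, at $s\in U$ with $\overline{\pi}_1(s)=(s,A,B)$, some $\xi\in\mathrm{OptSel}(z_i^k,s,k')$ with support $A$ and $\mathrm{CountOpt}(z_i^k,s,\xi,k')=B$. Stop when $I_{k'}=\emptyset$ and $U=\emptyset$ (the valuation sequence being constant afterwards). *)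

theory Defs
  imports "HOL-Probability.Probability"
begin

record ('s, 'm) cgame =
  cg_st :: "'s set"
  cg_mv :: "'m set"
  cg_g1 :: "'s \<Rightarrow> 'm set"
  cg_g2 :: "'s \<Rightarrow> 'm set"
  cg_tr :: "'s \<Rightarrow> 'm \<Rightarrow> 'm \<Rightarrow> 's pmf"

definition wf_cgame :: "('s, 'm) cgame \<Rightarrow> bool" where
  "wf_cgame G \<longleftrightarrow> finite (cg_st G) \<and> finite (cg_mv G) \<and>
     (\<forall>s\<in>cg_st G. cg_g1 G s \<noteq> {} \<and> cg_g1 G s \<subseteq> cg_mv G \<and>
        cg_g2 G s \<noteq> {} \<and> cg_g2 G s \<subseteq> cg_mv G \<and>
        (\<forall>a\<in>cg_g1 G s. \<forall>b\<in>cg_g2 G s. set_pmf (cg_tr G s a b) \<subseteq> cg_st G))"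

text \<open>General (history-dependent, randomized) strategies: a history is the nonempty
  list of states visited so far; the strategy picks a distribution over the moves
  available at the last state.\<close>

definition strategies1 :: "('s, 'm) cgame \<Rightarrow> ('s list \<Rightarrow> 'm pmf) set" where
  "strategies1 G = {\<pi>. \<forall>h. h \<noteq> [] \<and> last h \<in> cg_st G \<longrightarrow> set_pmf (\<pi> h) \<subseteq> cg_g1 G (last h)}"

definition strategies2 :: "('s, 'm) cgame \<Rightarrow> ('s list \<Rightarrow> 'm pmf) set" where
  "strategies2 G = {\<pi>. \<forall>h. h \<noteq> [] \<and> last h \<in> cg_st G \<longrightarrow> set_pmf (\<pi> h) \<subseteq> cg_g2 G (last h)}"

definition step_pmf :: "('s, 'm) cgame \<Rightarrow> ('s list \<Rightarrow> 'm pmf) \<Rightarrow> ('s list \<Rightarrow> 'm pmf)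
    \<Rightarrow> 's list \<Rightarrow> 's list pmf" where
  "step_pmf G \<pi>1 \<pi>2 h =
     bind_pmf (\<pi>1 h) (\<lambda>a. bind_pmf (\<pi>2 h) (\<lambda>b.
       map_pmf (\<lambda>t. h @ [t]) (cg_tr G (last h) a b)))"

text \<open>Distribution of the first n+1 states of the play from s.\<close>

fun hist_pmf :: "('s, 'm) cgame \<Rightarrow> ('s list \<Rightarrow> 'm pmf) \<Rightarrow> ('s list \<Rightarrow> 'm pmf)
    \<Rightarrow> 's \<Rightarrow> nat \<Rightarrow> 's list pmf" where
  "hist_pmf G \<pi>1 \<pi>2 s 0 = return_pmf [s]"
| "hist_pmf G \<pi>1 \<pi>2 s (Suc n) = bind_pmf (hist_pmf G \<pi>1 \<pi>2 s n) (step_pmf G \<pi>1 \<pi>2)"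

text \<open>Pr_s^{pi1,pi2}(Safe(F)): Safe(F) is the decreasing intersection of the cylinder
  events "the first n+1 states lie in F", so its probability is the infimum
  (limit) of the finite-horizon probabilities.\<close>

definition prob_safe :: "('s, 'm) cgame \<Rightarrow> ('s list \<Rightarrow> 'm pmf) \<Rightarrow> ('s list \<Rightarrow> 'm pmf)
    \<Rightarrow> 's set \<Rightarrow> 's \<Rightarrow> real" where
  "prob_safe G \<pi>1 \<pi>2 F s =
     (INF n. measure_pmf.prob (hist_pmf G \<pi>1 \<pi>2 s n) {h. set h \<subseteq> F})"

definition val1_strat :: "('s, 'm) cgame \<Rightarrow> ('s list \<Rightarrow> 'm pmf) \<Rightarrow> 's set \<Rightarrow> 's \<Rightarrow> real" where
  "val1_strat G \<pi>1 F s = (INF \<pi>2 \<in> strategies2 G. prob_safe G \<pi>1 \<pi>2 F s)"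

definition val1 :: "('s, 'm) cgame \<Rightarrow> 's set \<Rightarrow> 's \<Rightarrow> real" where
  "val1 G F s = (SUP \<pi>1 \<in> strategies1 G. val1_strat G \<pi>1 F s)"

definition W1 :: "('s, 'm) cgame \<Rightarrow> 's set \<Rightarrow> 's set" where
  "W1 G F = {s \<in> cg_st G. val1 G F s = 1}"

definition selector :: "('s, 'm) cgame \<Rightarrow> ('s \<Rightarrow> 'm pmf) \<Rightarrow> bool" where
  "selector G \<xi> \<longleftrightarrow> (\<forall>s\<in>cg_st G. set_pmf (\<xi> s) \<subseteq> cg_g1 G s)"

definition memoryless :: "('s \<Rightarrow> 'm pmf) \<Rightarrow> ('s list \<Rightarrow> 'm pmf)" where
  "memoryless \<xi> = (\<lambda>h. \<xi> (last h))"

definition kunif_dist :: "nat \<Rightarrow> 'm pmf \<Rightarrow> bool" where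
  "kunif_dist k d \<longleftrightarrow> (\<forall>a. \<exists>i j::nat. i \<le> j \<and> j \<le> k \<and> pmf d a = real i / real j)"

definition kunif_selector :: "('s, 'm) cgame \<Rightarrow> 's set \<Rightarrow> nat \<Rightarrow> ('s \<Rightarrow> 'm pmf) \<Rightarrow> bool" where
  "kunif_selector G F k \<xi> \<longleftrightarrow>
     (\<forall>s \<in> cg_st G - (W1 G F \<union> (cg_st G - F)). kunif_dist k (\<xi> s))"

definition pre_pair :: "('s, 'm) cgame \<Rightarrow> ('s \<Rightarrow> real) \<Rightarrow> 'm pmf \<Rightarrow> 'm pmf \<Rightarrow> 's \<Rightarrow> real" where
  "pre_pair G v d1 d2 s =
     (\<Sum>a\<in>cg_g1 G s. \<Sum>b\<in>cg_g2 G s. \<Sum>t\<in>cg_st G.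
        v t * pmf (cg_tr G s a b) t * pmf d1 a * pmf d2 b)"

definition pre_pure :: "('s, 'm) cgame \<Rightarrow> ('s \<Rightarrow> real) \<Rightarrow> 'm pmf \<Rightarrow> 'm \<Rightarrow> 's \<Rightarrow> real" where
  "pre_pure G v d1 b s =
     (\<Sum>a\<in>cg_g1 G s. \<Sum>t\<in>cg_st G. v t * pmf (cg_tr G s a b) t * pmf d1 a)"

definition pre1_sel :: "('s, 'm) cgame \<Rightarrow> ('s \<Rightarrow> real) \<Rightarrow> 'm pmf \<Rightarrow> 's \<Rightarrow> real" where
  "pre1_sel G v d s = (INF d2 \<in> {d2. set_pmf d2 \<subseteq> cg_g2 G s}. pre_pair G v d d2 s)"

definition pre1k :: "('s, 'm) cgame \<Rightarrow> nat \<Rightarrow> ('s \<Rightarrow> real) \<Rightarrow> 's \<Rightarrow> real" where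
  "pre1k G k v s =
     Max ((\<lambda>d. pre1_sel G v d s) ` {d. set_pmf d \<subseteq> cg_g1 G s \<and> kunif_dist k d})"

definition optsel :: "('s, 'm) cgame \<Rightarrow> nat \<Rightarrow> ('s \<Rightarrow> real) \<Rightarrow> 's \<Rightarrow> 'm pmf set" where
  "optsel G k v s = {d. set_pmf d \<subseteq> cg_g1 G s \<and> kunif_dist k d \<and>
                        pre1_sel G v d s = pre1k G k v s}"

definition countopt :: "('s, 'm) cgame \<Rightarrow> nat \<Rightarrow> ('s \<Rightarrow> real) \<Rightarrow> 's \<Rightarrow> 'm pmf \<Rightarrow> 'm set" where
  "countopt G k v s d = {b \<in> cg_g2 G s. pre_pure G v d b s = pre1k G k v s}"

definition optselcount :: "('s, 'm) cgame \<Rightarrow> nat \<Rightarrow> ('s \<Rightarrow> real) \<Rightarrow> 's \<Rightarrow> ('m set \<times> 'm set) set" where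
  "optselcount G k v s = (\<lambda>d. (set_pmf d, countopt G k v s d)) ` optsel G k v s"

datatype ('s, 'm) tbst = P1 's | P2 's "'m set" "'m set" | Rnd 's "'m set" 'm

fun tb_fst :: "('s, 'm) tbst \<Rightarrow> 's" where
  "tb_fst (P1 s) = s" | "tb_fst (P2 s A B) = s" | "tb_fst (Rnd s A b) = s"

definition tb_states :: "('s, 'm) cgame \<Rightarrow> nat \<Rightarrow> ('s \<Rightarrow> real) \<Rightarrow> ('s, 'm) tbst set" where
  "tb_states G k v =
     P1 ` cg_st G
     \<union> {P2 s A B | s A B. s \<in> cg_st G \<and> (A, B) \<in> optselcount G k v s}
     \<union> {Rnd s A b | s A B b. s \<in> cg_st G \<and> (A, B) \<in> optselcount G k v s \<and> b \<in> B}"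

fun tb_succ :: "('s, 'm) cgame \<Rightarrow> nat \<Rightarrow> ('s \<Rightarrow> real) \<Rightarrow> ('s, 'm) tbst \<Rightarrow> ('s, 'm) tbst set" where
  "tb_succ G k v (P1 s) = {P2 s A B | A B. (A, B) \<in> optselcount G k v s}"
| "tb_succ G k v (P2 s A B) = {Rnd s A b | b. b \<in> B}"
| "tb_succ G k v (Rnd s A b) = P1 ` (\<Union>a\<in>A. set_pmf (cg_tr G s a b))"

text \<open>The turn-based stochastic game, encoded as a concurrent game whose moves are
  the chosen successor states: player 1 chooses at player-1 states, player 2 at
  player-2 states (the other player has a single dummy move), and random states
  move uniformly at random to a successor.\<close>

definition TB :: "('s, 'm) cgame \<Rightarrow> nat \<Rightarrow> ('s \<Rightarrow> real) \<Rightarrow> (('s, 'm) tbst, ('s, 'm) tbst) cgame" where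
  "TB G k v =
     \<lparr> cg_st = tb_states G k v,
       cg_mv = tb_states G k v,
       cg_g1 = (\<lambda>u. case u of P1 s \<Rightarrow> tb_succ G k v u | _ \<Rightarrow> {u}),
       cg_g2 = (\<lambda>u. case u of P2 s A B \<Rightarrow> tb_succ G k v u | _ \<Rightarrow> {u}),
       cg_tr = (\<lambda>u a b. case u of P1 s \<Rightarrow> return_pmf a
                                | P2 s A B \<Rightarrow> return_pmf b
                                | Rnd s A c \<Rightarrow> pmf_of_set (tb_succ G k v u)) \<rparr>"

definition TB_F :: "('s, 'm) cgame \<Rightarrow> nat \<Rightarrow> ('s \<Rightarrow> real) \<Rightarrow> 's set \<Rightarrow> ('s, 'm) tbst set" where
  "TB_F G k v F = {u \<in> tb_states G k v. tb_fst u \<in> F}"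

definition as_win :: "('t, 't) cgame \<Rightarrow> 't set \<Rightarrow> 't set" where
  "as_win H Fb = {u \<in> cg_st H. \<exists>\<pi>1\<in>strategies1 H. \<forall>\<pi>2\<in>strategies2 H. prob_safe H \<pi>1 \<pi>2 Fb u = 1}"

definition pure_as_strategy :: "('t, 't) cgame \<Rightarrow> 't set \<Rightarrow> ('t \<Rightarrow> 't) \<Rightarrow> bool" where
  "pure_as_strategy H Fb \<sigma> \<longleftrightarrow>
     (\<forall>u\<in>cg_st H. \<sigma> u \<in> cg_g1 H u) \<and>
     (\<forall>u\<in>as_win H Fb. \<forall>\<pi>2\<in>strategies2 H.
         prob_safe H (\<lambda>h. return_pmf (\<sigma> (last h))) \<pi>2 Fb u = 1)"

definition improve_set :: "('s, 'm) cgame \<Rightarrow> 's set \<Rightarrow> nat \<Rightarrow> ('s \<Rightarrow> real) \<Rightarrow> 's set" where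
  "improve_set G F k v = {s \<in> cg_st G - (W1 G F \<union> (cg_st G - F)). pre1k G k v s > v s}"

definition alg_step :: "('s, 'm) cgame \<Rightarrow> 's set \<Rightarrow> nat \<Rightarrow> ('s \<Rightarrow> 'm pmf) \<Rightarrow> ('s \<Rightarrow> 'm pmf) \<Rightarrow> bool" where
  "alg_step G F k' \<gamma> \<gamma>' \<longleftrightarrow>
    (let z = val1_strat G (memoryless \<gamma>) F;
         I = improve_set G F k' z;
         U = {s \<in> cg_st G. P1 s \<in> as_win (TB G k' z) (TB_F G k' z F)} - W1 G F
     in (I \<noteq> {} \<and> (\<forall>s. s \<notin> I \<longrightarrow> \<gamma>' s = \<gamma> s) \<and> (\<forall>s\<in>I. \<gamma>' s \<in> optsel G k' z s))
      \<or> (I = {} \<and> U \<noteq> {} \<and>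
           (\<exists>\<sigma>. pure_as_strategy (TB G k' z) (TB_F G k' z F) \<sigma> \<and>
                (\<forall>s. s \<notin> U \<longrightarrow> \<gamma>' s = \<gamma> s) \<and>
                (\<forall>s\<in>U. \<exists>A B. \<sigma> (P1 s) = P2 s A B \<and> \<gamma>' s \<in> optsel G k' z s \<and>
                           set_pmf (\<gamma>' s) = A \<and> countopt G k' z s (\<gamma>' s) = B)))
      \<or> (I = {} \<and> U = {} \<and> \<gamma>' = \<gamma>))"

definition alg_run :: "('s, 'm) cgame \<Rightarrow> 's set \<Rightarrow> nat \<Rightarrow> (nat \<Rightarrow> 's \<Rightarrow> 'm pmf) \<Rightarrow> bool" where
  "alg_run G F k \<gamma> \<longleftrightarrow>
     \<gamma> 0 = (\<lambda>s. pmf_of_set (cg_g1 G s)) \<and>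
     (\<forall>i. alg_step G F (max k (card (cg_mv G))) (\<gamma> i) (\<gamma> (Suc i)))"

end

theory Submission
  imports Defs
begin
lemma measure_bind_pmf: "measure_pmf.prob (bind_pmf M N) X = (\<integral>x. measure_pmf.prob (N x) X \<partial>measure_pmf M)"
proof -
  have "ennreal (measure_pmf.prob (bind_pmf M N) X) = emeasure (measure_pmf (bind_pmf M N)) X"
    by (simp add: measure_pmf.emeasure_eq_measure)
  also have "\<dots> = (\<integral>\<^sup>+x. ennreal (measure_pmf.prob (N x) X) \<partial>M)"
    by (subst emeasure_bind_pmf) (simp only: measure_pmf.emeasure_eq_measure)
  also have "\<dots> = ennreal (\<integral>x. measure_pmf.prob (N x) X \<partial>measure_pmf M)"
    by (intro nn_integral_eq_integral measure_pmf.integrable_const_bound[where B=1]) auto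
  finally show ?thesis by (simp add: integral_nonneg_AE)
qed

lemma int_pmf_cong: "(\<And>x. x \<in> set_pmf p \<Longrightarrow> f x = g x) \<Longrightarrow>
   (\<integral>x. f x \<partial>measure_pmf p) = (\<integral>x. g x \<partial>measure_pmf p)"
  by (intro integral_cong_AE) (auto simp: AE_measure_pmf_iff)

lemma set_step_pmf: "set_pmf (step_pmf H \<pi>1 \<pi>2 h) \<subseteq> {h @ [t] | t. True}"
  unfolding step_pmf_def by auto

lemma hist_set: "h \<in> set_pmf (hist_pmf H \<pi>1 \<pi>2 s n) \<Longrightarrow> h \<noteq> [] \<and> hd h = s \<and> length h = Suc n"
proof (induction n arbitrary: h)
  case 0 then show ?case by simp
next
  case (Suc n)
  then obtain h0 where h0: "h0 \<in> set_pmf (hist_pmf H \<pi>1 \<pi>2 s n)" "h \<in> set_pmf (step_pmf H \<pi>1 \<pi>2 h0)"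
    by auto
  with set_step_pmf obtain t where "h = h0 @ [t]" by blast
  with Suc.IH[OF h0(1)] show ?case by auto
qed

lemma hist_cong:
  assumes "\<And>h. h \<noteq> [] \<Longrightarrow> hd h = s \<Longrightarrow> \<pi>1 h = \<pi>1' h \<and> \<pi>2 h = \<pi>2' h"
  shows "hist_pmf H \<pi>1 \<pi>2 s n = hist_pmf H \<pi>1' \<pi>2' s n"
proof (induction n)
  case 0 then show ?case by simp
next
  case (Suc n)
  have "bind_pmf (hist_pmf H \<pi>1 \<pi>2 s n) (step_pmf H \<pi>1 \<pi>2) = bind_pmf (hist_pmf H \<pi>1' \<pi>2' s n) (step_pmf H \<pi>1' \<pi>2')"
    unfolding Suc.IH
    by (intro bind_pmf_cong refl) (auto simp: step_pmf_def dest!: hist_set assms)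
  then show ?case by simp
qed

lemma hist_Suc_first:
  "hist_pmf H \<pi>1 \<pi>2 s (Suc n) =
    bind_pmf (\<pi>1 [s]) (\<lambda>a. bind_pmf (\<pi>2 [s]) (\<lambda>b. bind_pmf (cg_tr H s a b) (\<lambda>t.
      map_pmf (Cons s) (hist_pmf H (\<lambda>h. \<pi>1 (s#h)) (\<lambda>h. \<pi>2 (s#h)) t n))))"
proof (induction n)
  case 0
  then show ?case by (simp add: step_pmf_def bind_return_pmf map_pmf_def)
next
  case (Suc n)
  let ?p1 = "\<lambda>h. \<pi>1 (s#h)" and ?p2 = "\<lambda>h. \<pi>2 (s#h)"
  have st: "step_pmf H \<pi>1 \<pi>2 (s # h') = map_pmf (Cons s) (step_pmf H ?p1 ?p2 h')" if "h' \<noteq> []" for h'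
    using that by (simp add: step_pmf_def map_bind_pmf map_pmf_comp)
  have "hist_pmf H \<pi>1 \<pi>2 s (Suc (Suc n)) = bind_pmf (hist_pmf H \<pi>1 \<pi>2 s (Suc n)) (step_pmf H \<pi>1 \<pi>2)"
    by simp
  also have "\<dots> = bind_pmf (\<pi>1 [s]) (\<lambda>a. bind_pmf (\<pi>2 [s]) (\<lambda>b. bind_pmf (cg_tr H s a b) (\<lambda>t.
      bind_pmf (hist_pmf H ?p1 ?p2 t n) (\<lambda>h'. step_pmf H \<pi>1 \<pi>2 (s # h')))))"
    unfolding Suc.IH by (simp add: bind_assoc_pmf bind_map_pmf)
  also have "\<dots> = bind_pmf (\<pi>1 [s]) (\<lambda>a. bind_pmf (\<pi>2 [s]) (\<lambda>b. bind_pmf (cg_tr H s a b) (\<lambda>t.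
      map_pmf (Cons s) (hist_pmf H ?p1 ?p2 t (Suc n)))))"
  proof (intro bind_pmf_cong refl)
    fix t
    show "bind_pmf (hist_pmf H ?p1 ?p2 t n) (\<lambda>h'. step_pmf H \<pi>1 \<pi>2 (s # h')) = map_pmf (Cons s) (hist_pmf H ?p1 ?p2 t (Suc n))"
      unfolding hist_pmf.simps map_bind_pmf
      by (intro bind_pmf_cong refl) (auto simp: st dest!: hist_set)
  qed
  finally show ?case .
qed

definition Pn where
  "Pn H \<pi>1 \<pi>2 Fb s n = measure_pmf.prob (hist_pmf H \<pi>1 \<pi>2 s n) {h. set h \<subseteq> Fb}"

lemma Pn_0: "Pn H \<pi>1 \<pi>2 Fb s 0 = (if s \<in> Fb then 1 else 0)"
  by (simp add: Pn_def)

lemma Pn_Suc: "Pn H \<pi>1 \<pi>2 Fb s (Suc n) = (if s \<in> Fb then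
   (\<integral>a. (\<integral>b. (\<integral>t. Pn H (\<lambda>h. \<pi>1 (s#h)) (\<lambda>h. \<pi>2 (s#h)) Fb t n \<partial>cg_tr H s a b) \<partial>\<pi>2 [s]) \<partial>\<pi>1 [s])
   else 0)"
proof -
  have pre: "Cons s -` {h. set h \<subseteq> Fb} = (if s \<in> Fb then {h. set h \<subseteq> Fb} else {})" by auto
  show ?thesis
    unfolding Pn_def hist_Suc_first measure_bind_pmf measure_map_pmf pre
    by (cases "s \<in> Fb") auto
qed

lemma Pn_nonneg: "0 \<le> Pn H \<pi>1 \<pi>2 Fb s n" by (simp add: Pn_def)
lemma Pn_le1: "Pn H \<pi>1 \<pi>2 Fb s n \<le> 1" by (simp add: Pn_def)

lemma Pn_antimono_Suc: "Pn H \<pi>1 \<pi>2 Fb s (Suc n) \<le> Pn H \<pi>1 \<pi>2 Fb s n"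
proof -
  have "Pn H \<pi>1 \<pi>2 Fb s (Suc n) = (\<integral>h. measure_pmf.prob (step_pmf H \<pi>1 \<pi>2 h) {h. set h \<subseteq> Fb} \<partial>hist_pmf H \<pi>1 \<pi>2 s n)"
    by (simp add: Pn_def measure_bind_pmf)
  also have "\<dots> \<le> (\<integral>h. indicator {h. set h \<subseteq> Fb} h \<partial>hist_pmf H \<pi>1 \<pi>2 s n)"
  proof (intro integral_mono measure_pmf.integrable_const_bound[where B=1])
    fix h
    show "measure_pmf.prob (step_pmf H \<pi>1 \<pi>2 h) {h. set h \<subseteq> Fb} \<le> indicator {h. set h \<subseteq> Fb} h"
    proof (cases "set h \<subseteq> Fb")
      case True then show ?thesis by simp
    next
      case False
      then have "set_pmf (step_pmf H \<pi>1 \<pi>2 h) \<inter> {h. set h \<subseteq> Fb} = {}"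
        using set_step_pmf[of H \<pi>1 \<pi>2 h] by force
      then have "measure_pmf.prob (step_pmf H \<pi>1 \<pi>2 h) {h. set h \<subseteq> Fb} = 0"
        by (simp add: measure_pmf_zero_iff)
      with False show ?thesis by simp
    qed
  qed auto
  also have "\<dots> = Pn H \<pi>1 \<pi>2 Fb s n" by (simp add: Pn_def)
  finally show ?thesis .
qed

lemma Pn_antimono: "n \<le> m \<Longrightarrow> Pn H \<pi>1 \<pi>2 Fb s m \<le> Pn H \<pi>1 \<pi>2 Fb s n"
  by (induction m rule: dec_induct) (auto intro: order_trans[OF Pn_antimono_Suc])

lemma prob_safe_Pn: "prob_safe H \<pi>1 \<pi>2 Fb s = (INF n. Pn H \<pi>1 \<pi>2 Fb s n)"
  by (simp add: prob_safe_def Pn_def)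

lemma prob_safe_le: "prob_safe H \<pi>1 \<pi>2 Fb s \<le> Pn H \<pi>1 \<pi>2 Fb s n"
  unfolding prob_safe_Pn by (rule cINF_lower) (auto intro: bdd_belowI[where m=0] Pn_nonneg)

lemma prob_safe_nonneg: "0 \<le> prob_safe H \<pi>1 \<pi>2 Fb s"
  unfolding prob_safe_Pn by (rule cINF_greatest) (auto intro: Pn_nonneg)

lemma prob_safe_le1: "prob_safe H \<pi>1 \<pi>2 Fb s \<le> 1"
  using prob_safe_le[of H \<pi>1 \<pi>2 Fb s 0] Pn_le1[of H \<pi>1 \<pi>2 Fb s 0] by linarith

lemma prob_safe_approx:
  assumes "prob_safe H \<pi>1 \<pi>2 Fb s < c"
  shows "\<exists>N. \<forall>n\<ge>N. Pn H \<pi>1 \<pi>2 Fb s n < c"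
proof -
  from assms obtain N where "Pn H \<pi>1 \<pi>2 Fb s N < c"
    unfolding prob_safe_Pn by (subst (asm) cINF_less_iff) (auto intro: bdd_belowI[where m=0] Pn_nonneg)
  then show ?thesis using Pn_antimono by (meson le_less_trans)
qed

lemma prob_safe_ge: "(\<And>n. c \<le> Pn H \<pi>1 \<pi>2 Fb s n) \<Longrightarrow> c \<le> prob_safe H \<pi>1 \<pi>2 Fb s"
  unfolding prob_safe_Pn by (rule cINF_greatest) auto

lemma prob_safe_notin: "s \<notin> Fb \<Longrightarrow> prob_safe H \<pi>1 \<pi>2 Fb s = 0"
  using prob_safe_le[of H \<pi>1 \<pi>2 Fb s 0] prob_safe_nonneg[of H \<pi>1 \<pi>2 Fb s] by (simp add: Pn_0)

lemma Pn_shift_memoryless: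
  "Pn H (\<lambda>h. memoryless \<xi> (s#h)) \<pi>2 Fb t n = Pn H (memoryless \<xi>) \<pi>2 Fb t n"
  unfolding Pn_def by (subst hist_cong[where \<pi>1'="memoryless \<xi>" and \<pi>2'=\<pi>2]) (auto simp: memoryless_def)

lemma memoryless_single: "memoryless \<xi> [s] = \<xi> s" by (simp add: memoryless_def)

lemma strat2_at: "\<pi>2 \<in> strategies2 H \<Longrightarrow> h \<noteq> [] \<Longrightarrow> last h \<in> cg_st H \<Longrightarrow> set_pmf (\<pi>2 h) \<subseteq> cg_g2 H (last h)"
  unfolding strategies2_def by blast

lemma strategies2_shift: "\<pi>2 \<in> strategies2 H \<Longrightarrow> (\<lambda>h. \<pi>2 (s#h)) \<in> strategies2 H"
  unfolding strategies2_def
proof (clarify)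
  fix h x assume A: "\<forall>h. h \<noteq> [] \<and> last h \<in> cg_st H \<longrightarrow> set_pmf (\<pi>2 h) \<subseteq> cg_g2 H (last h)"
    and x: "x \<in> set_pmf (\<pi>2 (s # h))" and h: "h \<noteq> []" "last h \<in> cg_st H"
  from A[rule_format, of "s#h"] h x show "x \<in> cg_g2 H (last h)" by auto
qed


lemma inv_safe_Pn:
  assumes IS: "Inv \<subseteq> cg_st H" and IF: "Inv \<subseteq> Fb"
    and tr: "\<forall>u\<in>Inv. \<forall>a\<in>set_pmf (\<xi> u). \<forall>b\<in>cg_g2 H u. set_pmf (cg_tr H u a b) \<subseteq> Inv"
  shows "\<pi>2 \<in> strategies2 H \<Longrightarrow> u \<in> Inv \<Longrightarrow> Pn H (memoryless \<xi>) \<pi>2 Fb u n = 1"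
proof (induction n arbitrary: \<pi>2 u)
  case 0 then show ?case using IF by (auto simp: Pn_0)
next
  case (Suc n)
  have b: "set_pmf (\<pi>2 [u]) \<subseteq> cg_g2 H u" using strat2_at[OF Suc.prems(1), of "[u]"] Suc.prems IS by auto
  have "Pn H (memoryless \<xi>) \<pi>2 Fb u (Suc n) =
     (\<integral>a. (\<integral>b. (\<integral>t. Pn H (memoryless \<xi>) (\<lambda>h. \<pi>2 (u#h)) Fb t n \<partial>cg_tr H u a b) \<partial>\<pi>2 [u]) \<partial>\<xi> u)"
    using Suc.prems IF by (auto simp: Pn_Suc Pn_shift_memoryless memoryless_single)
  also have "\<dots> = (\<integral>a. (\<integral>b. (\<integral>t. 1 \<partial>cg_tr H u a b) \<partial>\<pi>2 [u]) \<partial>\<xi> u)"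
    using Suc.IH[OF strategies2_shift[OF Suc.prems(1)]] tr Suc.prems(2) b
    by (intro int_pmf_cong) blast
  also have "\<dots> = 1" by simp
  finally show ?case .
qed

lemma inv_safe:
  assumes "Inv \<subseteq> cg_st H" and "Inv \<subseteq> Fb"
    and "\<forall>u\<in>Inv. \<forall>a\<in>set_pmf (\<xi> u). \<forall>b\<in>cg_g2 H u. set_pmf (cg_tr H u a b) \<subseteq> Inv"
    and "\<pi>2 \<in> strategies2 H" and "u \<in> Inv"
  shows "prob_safe H (memoryless \<xi>) \<pi>2 Fb u = 1"
proof (rule antisym)
  show "prob_safe H (memoryless \<xi>) \<pi>2 Fb u \<le> 1" by (rule prob_safe_le1)
  show "1 \<le> prob_safe H (memoryless \<xi>) \<pi>2 Fb u"
    using inv_safe_Pn[OF assms] by (intro prob_safe_ge) simp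
qed

locale wfg =
  fixes G :: "('s, 'm) cgame"
  assumes wf: "wf_cgame G"
begin

lemma finS: "finite (cg_st G)" and finM: "finite (cg_mv G)"
  using wf by (auto simp: wf_cgame_def)

lemma g1_ne: "s \<in> cg_st G \<Longrightarrow> cg_g1 G s \<noteq> {}"
  and g2_ne: "s \<in> cg_st G \<Longrightarrow> cg_g2 G s \<noteq> {}"
  and g1_sub: "s \<in> cg_st G \<Longrightarrow> cg_g1 G s \<subseteq> cg_mv G"
  and g2_sub: "s \<in> cg_st G \<Longrightarrow> cg_g2 G s \<subseteq> cg_mv G"
  and tr_sub: "s \<in> cg_st G \<Longrightarrow> a \<in> cg_g1 G s \<Longrightarrow> b \<in> cg_g2 G s \<Longrightarrow> set_pmf (cg_tr G s a b) \<subseteq> cg_st G"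
  using wf by (auto simp: wf_cgame_def)

lemma fin1: "s \<in> cg_st G \<Longrightarrow> finite (cg_g1 G s)"
  using g1_sub finM finite_subset by blast
lemma fin2: "s \<in> cg_st G \<Longrightarrow> finite (cg_g2 G s)"
  using g2_sub finM finite_subset by blast

definition rho2 :: "'s list \<Rightarrow> 'm pmf" where
  "rho2 h = return_pmf (SOME b. b \<in> cg_g2 G (last h))"

lemma rho2: "rho2 \<in> strategies2 G"
  unfolding strategies2_def rho2_def using g2_ne by (auto intro: some_in_eq[THEN iffD2])

lemma strat2_ne: "strategies2 G \<noteq> {}" using rho2 by blast

lemma memoryless_strat1: "selector G \<xi> \<Longrightarrow> memoryless \<xi> \<in> strategies1 G"
  unfolding selector_def strategies1_def memoryless_def by auto

lemma triple_sum:
  assumes s: "s \<in> cg_st G" and d1: "set_pmf d1 \<subseteq> cg_g1 G s" and d2: "set_pmf d2 \<subseteq> cg_g2 G s"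
  shows "(\<integral>a. (\<integral>b. (\<integral>t. f t \<partial>cg_tr G s a b) \<partial>d2) \<partial>d1) =
     (\<Sum>b\<in>cg_g2 G s. pmf d2 b * pre_pure G f d1 b s)"
proof -
  have "(\<integral>a. (\<integral>b. (\<integral>t. f t \<partial>cg_tr G s a b) \<partial>d2) \<partial>d1) =
     (\<Sum>a\<in>cg_g1 G s. (\<Sum>b\<in>cg_g2 G s. (\<Sum>t\<in>cg_st G. f t * pmf (cg_tr G s a b) t) * pmf d2 b) * pmf d1 a)"
  proof (subst integral_measure_pmf_real[where A="cg_g1 G s"])
    show "finite (cg_g1 G s)" using fin1 s .
  next
    show "a \<in> cg_g1 G s" if "a \<in> set_pmf d1" for a using that d1 by auto
  next
    show "(\<Sum>a\<in>cg_g1 G s. (\<integral>b. (\<integral>t. f t \<partial>cg_tr G s a b) \<partial>d2) * pmf d1 a) =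
     (\<Sum>a\<in>cg_g1 G s. (\<Sum>b\<in>cg_g2 G s. (\<Sum>t\<in>cg_st G. f t * pmf (cg_tr G s a b) t) * pmf d2 b) * pmf d1 a)"
    proof (intro sum.cong refl arg_cong2[where f="(*)"])
      fix a assume a: "a \<in> cg_g1 G s"
      show "(\<integral>b. (\<integral>t. f t \<partial>cg_tr G s a b) \<partial>d2) = (\<Sum>b\<in>cg_g2 G s. (\<Sum>t\<in>cg_st G. f t * pmf (cg_tr G s a b) t) * pmf d2 b)"
      proof (subst integral_measure_pmf_real[where A="cg_g2 G s"])
        show "finite (cg_g2 G s)" using fin2 s .
      next
        show "b \<in> cg_g2 G s" if "b \<in> set_pmf d2" for b using that d2 by auto
      next
        show "(\<Sum>b\<in>cg_g2 G s. (\<integral>t. f t \<partial>cg_tr G s a b) * pmf d2 b) = (\<Sum>b\<in>cg_g2 G s. (\<Sum>t\<in>cg_st G. f t * pmf (cg_tr G s a b) t) * pmf d2 b)"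
        proof (intro sum.cong refl arg_cong2[where f="(*)"])
          fix b assume b: "b \<in> cg_g2 G s"
          show "(\<integral>t. f t \<partial>cg_tr G s a b) = (\<Sum>t\<in>cg_st G. f t * pmf (cg_tr G s a b) t)"
            using tr_sub[OF s a b] finS by (intro integral_measure_pmf_real) auto
        qed
      qed
    qed
  qed
  also have "\<dots> = (\<Sum>b\<in>cg_g2 G s. pmf d2 b * pre_pure G f d1 b s)"
    unfolding pre_pure_def sum_distrib_left sum_distrib_right
    by (subst sum.swap) (simp add: ac_simps)
  finally show ?thesis .
qed

lemma pre_pure_mono:
  assumes "\<forall>t\<in>cg_st G. f t \<le> g t"
  shows "pre_pure G f d b s \<le> pre_pure G g d b s"
  unfolding pre_pure_def using assms
  by (intro sum_mono mult_right_mono) auto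


lemma val_le: "\<pi>2 \<in> strategies2 G \<Longrightarrow> val1_strat G \<pi>1 F s \<le> prob_safe G \<pi>1 \<pi>2 F s"
  unfolding val1_strat_def by (rule cINF_lower) (auto intro: bdd_belowI[where m=0] prob_safe_nonneg)

lemma val_ge: "(\<And>\<pi>2. \<pi>2 \<in> strategies2 G \<Longrightarrow> c \<le> prob_safe G \<pi>1 \<pi>2 F s) \<Longrightarrow> c \<le> val1_strat G \<pi>1 F s"
  unfolding val1_strat_def using strat2_ne by (intro cINF_greatest) auto

lemma val_nonneg: "0 \<le> val1_strat G \<pi>1 F s"
  by (rule val_ge) (rule prob_safe_nonneg)

lemma val_le1: "val1_strat G \<pi>1 F s \<le> 1"
  using val_le[OF rho2, of \<pi>1 F s] prob_safe_le1[of G \<pi>1 rho2 F s] by linarith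

lemma val_approx: "val1_strat G \<pi>1 F s < c \<Longrightarrow> \<exists>\<pi>2\<in>strategies2 G. prob_safe G \<pi>1 \<pi>2 F s < c"
  unfolding val1_strat_def using strat2_ne
  by (subst (asm) cINF_less_iff) (auto intro: bdd_belowI[where m=0] prob_safe_nonneg)

lemma val_notin: "s \<notin> F \<Longrightarrow> val1_strat G \<pi>1 F s = 0"
  using val_le[OF rho2, of \<pi>1 F s] val_nonneg[of \<pi>1 F s] prob_safe_notin[of s F G \<pi>1 rho2] by simp

lemma M1_Pn:
  assumes sel: "selector G \<xi>"
    and v01: "\<forall>t\<in>cg_st G. 0 \<le> v t \<and> v t \<le> 1"
    and v0: "\<forall>t\<in>cg_st G - F. v t = 0"
    and vpre: "\<forall>s\<in>cg_st G \<inter> F. \<forall>b\<in>cg_g2 G s. v s \<le> pre_pure G v (\<xi> s) b s"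
  shows "\<pi>2 \<in> strategies2 G \<Longrightarrow> s \<in> cg_st G \<Longrightarrow> v s \<le> Pn G (memoryless \<xi>) \<pi>2 F s n"
proof (induction n arbitrary: \<pi>2 s)
  case 0
  then show ?case using v01 v0 by (auto simp: Pn_0)
next
  case (Suc n)
  show ?case
  proof (cases "s \<in> F")
    case False
    then show ?thesis using v0 Suc.prems by (simp add: Pn_Suc)
  next
    case True
    let ?p2 = "\<lambda>h. \<pi>2 (s#h)"
    have d1: "set_pmf (memoryless \<xi> [s]) \<subseteq> cg_g1 G s"
      using sel Suc.prems by (auto simp: selector_def memoryless_def)
    have d2: "set_pmf (\<pi>2 [s]) \<subseteq> cg_g2 G s"
      using strat2_at[OF Suc.prems(1), of "[s]"] Suc.prems by simp
    have "Pn G (memoryless \<xi>) \<pi>2 F s (Suc n) =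
       (\<Sum>b\<in>cg_g2 G s. pmf (\<pi>2 [s]) b * pre_pure G (\<lambda>t. Pn G (memoryless \<xi>) ?p2 F t n) (\<xi> s) b s)"
      using True triple_sum[OF Suc.prems(2) d1 d2]
      by (simp add: Pn_Suc Pn_shift_memoryless memoryless_single)
    also have "\<dots> \<ge> (\<Sum>b\<in>cg_g2 G s. pmf (\<pi>2 [s]) b * v s)"
    proof (intro sum_mono mult_left_mono)
      fix b assume b: "b \<in> cg_g2 G s"
      have "v s \<le> pre_pure G v (\<xi> s) b s" using vpre True Suc.prems b by auto
      also have "\<dots> \<le> pre_pure G (\<lambda>t. Pn G (memoryless \<xi>) ?p2 F t n) (\<xi> s) b s"
        using Suc.IH[OF strategies2_shift[OF Suc.prems(1)]] by (intro pre_pure_mono) auto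
      finally show "v s \<le> pre_pure G (\<lambda>t. Pn G (memoryless \<xi>) ?p2 F t n) (\<xi> s) b s" .
    qed simp
    also have "(\<Sum>b\<in>cg_g2 G s. pmf (\<pi>2 [s]) b * v s) = v s"
      using sum_pmf_eq_1[OF fin2[OF Suc.prems(2)] d2] by (simp add: sum_distrib_right[symmetric])
    finally show ?thesis .
  qed
qed

lemma M1:
  assumes sel: "selector G \<xi>"
    and v01: "\<forall>t\<in>cg_st G. 0 \<le> v t \<and> v t \<le> 1"
    and v0: "\<forall>t\<in>cg_st G - F. v t = 0"
    and vpre: "\<forall>s\<in>cg_st G \<inter> F. \<forall>b\<in>cg_g2 G s. v s \<le> pre_pure G v (\<xi> s) b s"
    and s: "s \<in> cg_st G"
  shows "v s \<le> val1_strat G (memoryless \<xi>) F s"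
  using M1_Pn[OF sel v01 v0 vpre _ s] by (intro val_ge prob_safe_ge) auto


lemma pre_pure_add: "pre_pure G (\<lambda>t. f t + g t) d b s = pre_pure G f d b s + pre_pure G g d b s"
  unfolding pre_pure_def by (simp add: algebra_simps sum.distrib)

lemma pre_pure_cmult: "pre_pure G (\<lambda>t. c * f t) d b s = c * pre_pure G f d b s"
  unfolding pre_pure_def by (simp add: algebra_simps sum_distrib_left)

lemma pre_pure_const:
  assumes s: "s \<in> cg_st G" and d: "set_pmf d \<subseteq> cg_g1 G s" and b: "b \<in> cg_g2 G s"
  shows "pre_pure G (\<lambda>t. c) d b s = c"
proof -
  have "pre_pure G (\<lambda>t. c) d b s = (\<Sum>a\<in>cg_g1 G s. c * (\<Sum>t\<in>cg_st G. pmf (cg_tr G s a b) t) * pmf d a)"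
    unfolding pre_pure_def by (simp add: sum_distrib_left sum_distrib_right algebra_simps)
  also have "\<dots> = (\<Sum>a\<in>cg_g1 G s. c * pmf d a)"
    using tr_sub[OF s _ b] finS by (intro sum.cong refl) (simp add: sum_pmf_eq_1)
  also have "\<dots> = c" using sum_pmf_eq_1[OF fin1[OF s] d] by (simp add: sum_distrib_left[symmetric])
  finally show ?thesis .
qed

lemma sum_return: "finite B \<Longrightarrow> b \<in> B \<Longrightarrow> (\<Sum>b'\<in>B. pmf (return_pmf b) b' * X b') = X b"
  by (simp add: indicator_def)

lemma M2:
  assumes sel: "selector G \<xi>" and s: "s \<in> cg_st G" and sF: "s \<in> F" and b: "b \<in> cg_g2 G s"
  shows "val1_strat G (memoryless \<xi>) F s \<le> pre_pure G (val1_strat G (memoryless \<xi>) F) (\<xi> s) b s"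
proof (rule field_le_epsilon)
  fix e :: real assume e: "0 < e"
  let ?w = "val1_strat G (memoryless \<xi>) F"
  have "\<forall>t\<in>cg_st G. \<exists>\<pi>\<in>strategies2 G. prob_safe G (memoryless \<xi>) \<pi> F t < ?w t + e"
    using e by (intro ballI val_approx) auto
  then obtain f where f: "\<And>t. t \<in> cg_st G \<Longrightarrow> f t \<in> strategies2 G \<and> prob_safe G (memoryless \<xi>) (f t) F t < ?w t + e"
    by metis
  define pf where "pf y = (if y \<in> cg_st G then f y else rho2)" for y
  have pf: "pf y \<in> strategies2 G" for y using f rho2 by (simp add: pf_def)
  have "\<forall>t\<in>cg_st G. \<exists>N. \<forall>n\<ge>N. Pn G (memoryless \<xi>) (pf t) F t n < ?w t + e"
    using f by (intro ballI prob_safe_approx) (simp add: pf_def)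
  then obtain Nf where Nf: "\<And>t n. t \<in> cg_st G \<Longrightarrow> n \<ge> Nf t \<Longrightarrow> Pn G (memoryless \<xi>) (pf t) F t n < ?w t + e"
    by metis
  define N where "N = (\<Sum>t\<in>cg_st G. Nf t)"
  have NN: "t \<in> cg_st G \<Longrightarrow> Nf t \<le> N" for t unfolding N_def using finS by (intro member_le_sum) auto
  define \<pi>2 where "\<pi>2 h = (case h of [] \<Rightarrow> rho2 h | [x] \<Rightarrow> (if x = s then return_pmf b else rho2 h)
                              | x # y # r \<Rightarrow> pf y (y # r))" for h
  have \<pi>2: "\<pi>2 \<in> strategies2 G"
    unfolding strategies2_def
  proof (clarify)
    fix h x assume h: "h \<noteq> []" "last h \<in> cg_st G" and x: "x \<in> set_pmf (\<pi>2 h)"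
    show "x \<in> cg_g2 G (last h)"
    proof (cases h)
      case Nil then show ?thesis using h by simp
    next
      case (Cons x0 r)
      show ?thesis
      proof (cases r)
        case Nil
        then show ?thesis using Cons x h b strat2_at[OF rho2 h] by (auto simp: \<pi>2_def split: if_splits)
      next
        case (Cons y r')
        then have "last h = last (y # r')" using \<open>h = x0 # r\<close> by simp
        moreover have "x \<in> set_pmf (pf y (y # r'))" using Cons \<open>h = x0 # r\<close> x by (simp add: \<pi>2_def)
        ultimately show ?thesis using h strat2_at[OF pf, of "y # r'" y] by auto
      qed
    qed
  qed
  have d1: "set_pmf (\<xi> s) \<subseteq> cg_g1 G s" using sel s by (auto simp: selector_def)
  have pi2s: "\<pi>2 [s] = return_pmf b" by (simp add: \<pi>2_def)
  have shift: "Pn G (\<lambda>h. memoryless \<xi> (s#h)) (\<lambda>h. \<pi>2 (s#h)) F t N = Pn G (memoryless \<xi>) (pf t) F t N" for t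
    unfolding Pn_def
    by (subst hist_cong[where \<pi>1'="memoryless \<xi>" and \<pi>2'="pf t"])
       (auto simp: memoryless_def \<pi>2_def neq_Nil_conv)
  have "?w s \<le> prob_safe G (memoryless \<xi>) \<pi>2 F s" by (rule val_le[OF \<pi>2])
  also have "\<dots> \<le> Pn G (memoryless \<xi>) \<pi>2 F s (Suc N)" by (rule prob_safe_le)
  also have "\<dots> = (\<Sum>b'\<in>cg_g2 G s. pmf (\<pi>2 [s]) b' * pre_pure G (\<lambda>t. Pn G (\<lambda>h. memoryless \<xi> (s#h)) (\<lambda>h. \<pi>2 (s#h)) F t N) (\<xi> s) b' s)"
    using sF triple_sum[OF s d1, of "return_pmf b"] b
    by (simp add: Pn_Suc memoryless_single pi2s del: pmf_return)
  also have "\<dots> = pre_pure G (\<lambda>t. Pn G (memoryless \<xi>) (pf t) F t N) (\<xi> s) b s"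
    unfolding pi2s shift using fin2[OF s] b by (rule sum_return)
  also have "\<dots> \<le> pre_pure G (\<lambda>t. ?w t + e) (\<xi> s) b s"
    using Nf NN by (intro pre_pure_mono) (auto intro: less_imp_le)
  also have "\<dots> = pre_pure G ?w (\<xi> s) b s + e"
    by (simp add: pre_pure_add pre_pure_const[OF s d1 b])
  finally show "?w s \<le> pre_pure G ?w (\<xi> s) b s + e" .
qed


definition K :: "nat \<Rightarrow> 's \<Rightarrow> 'm pmf set" where
  "K k s = {d. set_pmf d \<subseteq> cg_g1 G s \<and> kunif_dist k d}"

lemma finite_K:
  assumes s: "s \<in> cg_st G" shows "finite (K k s)"
proof -
  define V where "V = (\<lambda>(i,j). real i / real j) ` ({0..k} \<times> {0..k})"
  have finV: "finite V" unfolding V_def by auto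
  have inj: "inj_on (\<lambda>d. restrict (pmf d) (cg_g1 G s)) (K k s)"
  proof (rule inj_onI)
    fix d1 d2 assume d1: "d1 \<in> K k s" and d2: "d2 \<in> K k s"
      and eq: "restrict (pmf d1) (cg_g1 G s) = restrict (pmf d2) (cg_g1 G s)"
    show "d1 = d2"
    proof (rule pmf_eqI)
      fix a show "pmf d1 a = pmf d2 a"
      proof (cases "a \<in> cg_g1 G s")
        case True then show ?thesis using fun_cong[OF eq, of a] by simp
      next
        case False
        then have "a \<notin> set_pmf d1" "a \<notin> set_pmf d2" using d1 d2 by (auto simp: K_def)
        then show ?thesis by (simp add: set_pmf_iff)
      qed
    qed
  qed
  have "(\<lambda>d. restrict (pmf d) (cg_g1 G s)) ` K k s \<subseteq> PiE (cg_g1 G s) (\<lambda>_. V)"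
  proof clarify
    fix d assume d: "d \<in> K k s"
    show "restrict (pmf d) (cg_g1 G s) \<in> PiE (cg_g1 G s) (\<lambda>_. V)"
    proof (rule PiE_I)
      fix a
      from d obtain i j where "i \<le> j" "j \<le> k" "pmf d a = real i / real j"
        unfolding K_def kunif_dist_def by blast
      then show "restrict (pmf d) (cg_g1 G s) a \<in> V" if "a \<in> cg_g1 G s"
        using that unfolding V_def by (auto intro!: image_eqI[where x="(i,j)"])
    qed auto
  qed
  then have "finite ((\<lambda>d. restrict (pmf d) (cg_g1 G s)) ` K k s)"
    by (rule finite_subset) (intro finite_PiE fin1[OF s] finV)
  then show ?thesis using inj finite_imageD by blast
qed

lemma K_return: "k \<ge> 1 \<Longrightarrow> a \<in> cg_g1 G s \<Longrightarrow> return_pmf a \<in> K k s"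
  unfolding K_def kunif_dist_def
proof (intro CollectI conjI allI)
  fix a' assume "k \<ge> 1"
  show "\<exists>i j. i \<le> j \<and> j \<le> k \<and> pmf (return_pmf a) a' = real i / real j"
  proof (cases "a' = a")
    case True then show ?thesis using \<open>k \<ge> 1\<close> by (intro exI[where x=1] exI[where x="1::nat"]) auto
  next
    case False then show ?thesis by (intro exI[where x=0] exI[where x="1::nat"]) (use \<open>k \<ge> 1\<close> in auto)
  qed
qed auto

lemma K_ne: "k \<ge> 1 \<Longrightarrow> s \<in> cg_st G \<Longrightarrow> K k s \<noteq> {}"
  using K_return g1_ne by blast

lemma pre1k_K: "pre1k G k v s = Max ((\<lambda>d. pre1_sel G v d s) ` K k s)"
  unfolding pre1k_def K_def ..

lemma pre1k_ge: "s \<in> cg_st G \<Longrightarrow> d \<in> K k s \<Longrightarrow> pre1_sel G v d s \<le> pre1k G k v s"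
  unfolding pre1k_K by (intro Max_ge finite_imageI finite_K) auto

lemma pre1k_attained: "k \<ge> 1 \<Longrightarrow> s \<in> cg_st G \<Longrightarrow> \<exists>d\<in>K k s. pre1_sel G v d s = pre1k G k v s"
  unfolding pre1k_K using finite_K K_ne
  by (metis (no_types, lifting) Max_in finite_imageI image_iff image_is_empty)

lemma pre_pair_sum: "pre_pair G v d d2 s = (\<Sum>b\<in>cg_g2 G s. pmf d2 b * pre_pure G v d b s)"
  unfolding pre_pair_def pre_pure_def sum_distrib_left sum_distrib_right
  by (subst sum.swap) (simp add: ac_simps)

lemma pre1_sel_min:
  assumes s: "s \<in> cg_st G"
  shows "pre1_sel G v d s = Min ((\<lambda>b. pre_pure G v d b s) ` cg_g2 G s)"
proof -
  let ?m = "Min ((\<lambda>b. pre_pure G v d b s) ` cg_g2 G s)"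
  have fin: "finite ((\<lambda>b. pre_pure G v d b s) ` cg_g2 G s)" using fin2[OF s] by simp
  have ne: "(\<lambda>b. pre_pure G v d b s) ` cg_g2 G s \<noteq> {}" using g2_ne[OF s] by simp
  obtain b0 where b0: "b0 \<in> cg_g2 G s" "pre_pure G v d b0 s = ?m"
    using Max_in[OF fin ne] Min_in[OF fin ne] by auto
  have lb: "?m \<le> pre_pair G v d d2 s" if d2: "set_pmf d2 \<subseteq> cg_g2 G s" for d2
  proof -
    have "?m = (\<Sum>b\<in>cg_g2 G s. pmf d2 b * ?m)"
      using sum_pmf_eq_1[OF fin2[OF s] d2] by (simp add: sum_distrib_right[symmetric])
    also have "\<dots> \<le> (\<Sum>b\<in>cg_g2 G s. pmf d2 b * pre_pure G v d b s)"
      using fin by (intro sum_mono mult_left_mono Min_le) auto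
    finally show ?thesis by (simp add: pre_pair_sum)
  qed
  have att: "pre_pair G v d (return_pmf b0) s = ?m"
    unfolding pre_pair_sum b0(2)[symmetric] using fin2[OF s] b0(1) by (rule sum_return)
  show ?thesis unfolding pre1_sel_def
  proof (rule antisym)
    show "(INF d2\<in>{d2. set_pmf d2 \<subseteq> cg_g2 G s}. pre_pair G v d d2 s) \<le> ?m"
      unfolding att[symmetric] using b0 lb
      by (intro cINF_lower bdd_belowI[where m="?m"]) auto
    show "?m \<le> (INF d2\<in>{d2. set_pmf d2 \<subseteq> cg_g2 G s}. pre_pair G v d d2 s)"
      using lb b0 by (intro cINF_greatest) (auto intro!: exI[where x="return_pmf b0"])
  qed
qed

lemma pre1_sel_le: "s \<in> cg_st G \<Longrightarrow> b \<in> cg_g2 G s \<Longrightarrow> pre1_sel G v d s \<le> pre_pure G v d b s"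
  unfolding pre1_sel_min using fin2 by (intro Min_le) auto

lemma pre1_sel_att: "s \<in> cg_st G \<Longrightarrow> \<exists>b\<in>cg_g2 G s. pre_pure G v d b s = pre1_sel G v d s"
  unfolding pre1_sel_min using fin2 g2_ne
  by (metis (no_types, lifting) Min_in finite_imageI image_iff image_is_empty)

lemma pre1_sel_ge: "s \<in> cg_st G \<Longrightarrow> (\<And>b. b \<in> cg_g2 G s \<Longrightarrow> c \<le> pre_pure G v d b s) \<Longrightarrow> c \<le> pre1_sel G v d s"
  using pre1_sel_att by metis


lemma pre_pure_zero:
  assumes s: "s \<in> cg_st G" and nn: "\<forall>t\<in>cg_st G. 0 \<le> f t" and le: "pre_pure G f d b s \<le> 0"
    and a: "a \<in> set_pmf d" "a \<in> cg_g1 G s" and t: "t \<in> set_pmf (cg_tr G s a b)" "t \<in> cg_st G"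
  shows "f t = 0"
proof -
  have nn2: "\<forall>a\<in>cg_g1 G s. 0 \<le> (\<Sum>t\<in>cg_st G. f t * pmf (cg_tr G s a b) t) * pmf d a"
    using nn by (auto intro!: sum_nonneg mult_nonneg_nonneg)
  have "pre_pure G f d b s = (\<Sum>a\<in>cg_g1 G s. (\<Sum>t\<in>cg_st G. f t * pmf (cg_tr G s a b) t) * pmf d a)"
    unfolding pre_pure_def by (simp add: sum_distrib_right)
  then have "(\<Sum>a\<in>cg_g1 G s. (\<Sum>t\<in>cg_st G. f t * pmf (cg_tr G s a b) t) * pmf d a) = 0"
    using le nn2 sum_nonneg[of "cg_g1 G s"] by (metis (no_types, lifting) order_antisym)
  then have "(\<Sum>t\<in>cg_st G. f t * pmf (cg_tr G s a b) t) * pmf d a = 0"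
    using nn2 fin1[OF s] a(2) by (subst (asm) sum_nonneg_eq_0_iff) auto
  then have "(\<Sum>t\<in>cg_st G. f t * pmf (cg_tr G s a b) t) = 0"
    using a(1) by (simp add: set_pmf_iff)
  then have "f t * pmf (cg_tr G s a b) t = 0"
    using nn finS t(2) by (subst (asm) sum_nonneg_eq_0_iff) auto
  then show ?thesis using t(1) by (simp add: set_pmf_iff)
qed

lemma optsel_K: "d \<in> optsel G k v s \<longleftrightarrow> d \<in> K k s \<and> pre1_sel G v d s = pre1k G k v s"
  unfolding optsel_def K_def by auto

lemma optsel_ne: "k \<ge> 1 \<Longrightarrow> s \<in> cg_st G \<Longrightarrow> optsel G k v s \<noteq> {}"
  using pre1k_attained optsel_K by blast

lemma countopt_ne: "s \<in> cg_st G \<Longrightarrow> d \<in> optsel G k v s \<Longrightarrow> countopt G k v s d \<noteq> {}"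
  unfolding countopt_def using pre1_sel_att[of s v d] optsel_K[of d k v s] by auto

lemma tb_succ_P1_ne: "k \<ge> 1 \<Longrightarrow> s \<in> cg_st G \<Longrightarrow> tb_succ G k v (P1 s) \<noteq> {}"
  using optsel_ne[of k s v] by (auto simp: optselcount_def)


lemma TB_st[simp]: "cg_st (TB G k v) = tb_states G k v" by (simp add: TB_def)
lemma TB_g1_P1[simp]: "cg_g1 (TB G k v) (P1 s) = tb_succ G k v (P1 s)" by (simp add: TB_def)
lemma TB_g1_P2[simp]: "cg_g1 (TB G k v) (P2 s A B) = {P2 s A B}" by (simp add: TB_def)
lemma TB_g1_Rnd[simp]: "cg_g1 (TB G k v) (Rnd s A b) = {Rnd s A b}" by (simp add: TB_def)
lemma TB_g2_P1[simp]: "cg_g2 (TB G k v) (P1 s) = {P1 s}" by (simp add: TB_def)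
lemma TB_g2_P2[simp]: "cg_g2 (TB G k v) (P2 s A B) = tb_succ G k v (P2 s A B)" by (simp add: TB_def)
lemma TB_g2_Rnd[simp]: "cg_g2 (TB G k v) (Rnd s A b) = {Rnd s A b}" by (simp add: TB_def)
lemma TB_tr_P1[simp]: "cg_tr (TB G k v) (P1 s) x y = return_pmf x" by (simp add: TB_def)
lemma TB_tr_P2[simp]: "cg_tr (TB G k v) (P2 s A B) x y = return_pmf y" by (simp add: TB_def)
lemma TB_tr_Rnd[simp]: "cg_tr (TB G k v) (Rnd s A b) x y = pmf_of_set (tb_succ G k v (Rnd s A b))" by (simp add: TB_def)

lemma TB_g2_ne: "u \<in> tb_states G k v \<Longrightarrow> cg_g2 (TB G k v) u \<noteq> {}"
  by (cases u) (auto simp: tb_states_def optselcount_def dest: countopt_ne)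

lemma TB_strat2_ne: "strategies2 (TB G k v) \<noteq> {}"
proof -
  define r where "r h = return_pmf (SOME x. x \<in> cg_g2 (TB G k v) (last h))" for h :: "('s,'m) tbst list"
  have "r \<in> strategies2 (TB G k v)"
    unfolding strategies2_def r_def
    using TB_g2_ne by (auto intro: some_in_eq[THEN iffD2])
  then show ?thesis by blast
qed

lemma as_win_F: "u \<in> as_win (TB G k v) Fb \<Longrightarrow> u \<in> Fb"
  using TB_strat2_ne[of k v] prob_safe_notin[of u Fb "TB G k v"]
  unfolding as_win_def by fastforce

lemma as_win_st: "u \<in> as_win H Fb \<Longrightarrow> u \<in> cg_st H"
  unfolding as_win_def by auto


end
context wfg begin
lemma caseC:
  assumes k1: "k \<ge> 1"
    and sel: "selector G \<xi>" and ku: "kunif_selector G F k \<xi>"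
    and z01: "\<forall>t\<in>cg_st G. 0 \<le> z t \<and> z t \<le> 1"
    and z0: "\<forall>t\<in>cg_st G - F. z t = 0"
    and z1: "\<forall>t\<in>W1 G F. z t = 1"
    and noI: "\<forall>s\<in>cg_st G - (W1 G F \<union> (cg_st G - F)). pre1k G k z s \<le> z s"
    and noU: "\<forall>s\<in>cg_st G. P1 s \<in> as_win (TB G k z) (TB_F G k z F) \<longrightarrow> s \<in> W1 G F"
    and s: "s \<in> cg_st G"
  shows "val1_strat G (memoryless \<xi>) F s \<le> z s"
proof (rule ccontr)
  assume contra: "\<not> ?thesis"
  define w where "w = val1_strat G (memoryless \<xi>) F"
  define D where "D t = w t - z t" for t
  define \<Delta> where "\<Delta> = Max (D ` cg_st G)"
  have finD: "finite (D ` cg_st G)" using finS by simp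
  have Dle: "t \<in> cg_st G \<Longrightarrow> D t \<le> \<Delta>" for t unfolding \<Delta>_def using finD by (intro Max_ge) auto
  have Dpos: "0 < \<Delta>" using Dle[OF s] contra by (simp add: D_def w_def)
  define Z where "Z = {t\<in>cg_st G. D t = \<Delta>}"
  obtain s0 where s0: "s0 \<in> Z"
    using Max_in[OF finD] s unfolding Z_def \<Delta>_def by fastforce
  have wz: "(\<lambda>u. z u + D u) = w" by (auto simp: D_def)
  have key: "t \<in> F \<and> t \<notin> W1 G F \<and> \<xi> t \<in> optsel G k z t \<and>
      (\<forall>b\<in>countopt G k z t (\<xi> t). \<forall>a\<in>set_pmf (\<xi> t). \<forall>u\<in>set_pmf (cg_tr G t a b). u \<in> Z)"
    if tZ: "t \<in> Z" for t
  proof -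
    have tS: "t \<in> cg_st G" and Dt: "D t = \<Delta>" using tZ by (auto simp: Z_def)
    have tF: "t \<in> F"
    proof (rule ccontr)
      assume "t \<notin> F"
      then have "D t = 0" using z0 tS by (simp add: D_def w_def val_notin)
      then show False using Dt Dpos by simp
    qed
    have tW: "t \<notin> W1 G F"
    proof
      assume "t \<in> W1 G F"
      then have "D t \<le> 0" using z1 val_le1 by (simp add: D_def w_def)
      then show False using Dt Dpos by simp
    qed
    let ?d = "\<xi> t"
    have dsup: "set_pmf ?d \<subseteq> cg_g1 G t" using sel tS by (auto simp: selector_def)
    have dK: "?d \<in> K k t" using ku tS tF tW dsup by (auto simp: K_def kunif_selector_def)
    have dec: "w t \<le> pre_pure G z ?d b t + pre_pure G D ?d b t" if b: "b \<in> cg_g2 G t" for b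
      using M2[OF sel tS tF b] unfolding w_def[symmetric] wz[symmetric] pre_pure_add by simp
    have Dpre: "pre_pure G D ?d b t \<le> \<Delta>" if b: "b \<in> cg_g2 G t" for b
    proof -
      have "pre_pure G D ?d b t \<le> pre_pure G (\<lambda>_. \<Delta>) ?d b t" using Dle by (intro pre_pure_mono) auto
      also have "\<dots> = \<Delta>" by (rule pre_pure_const[OF tS dsup b])
      finally show ?thesis .
    qed
    obtain b0 where b0: "b0 \<in> cg_g2 G t" "pre_pure G z ?d b0 t = pre1_sel G z ?d t"
      using pre1_sel_att[OF tS] by blast
    have wt: "w t = z t + \<Delta>" using Dt by (simp add: D_def)
    have p1: "pre1_sel G z ?d t \<le> pre1k G k z t" by (rule pre1k_ge[OF tS dK])
    have p2: "pre1k G k z t \<le> z t" using noI tS tF tW by auto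
    have "w t \<le> pre1_sel G z ?d t + \<Delta>" using dec[OF b0(1)] Dpre[OF b0(1)] b0(2) by simp
    then have eq1: "pre1_sel G z ?d t = pre1k G k z t" and eq2: "pre1k G k z t = z t"
      using wt p1 p2 by linarith+
    have opt: "?d \<in> optsel G k z t" using dK eq1 by (simp add: optsel_K)
    have succ: "u \<in> Z" if b: "b \<in> countopt G k z t ?d" and a: "a \<in> set_pmf ?d"
      and u: "u \<in> set_pmf (cg_tr G t a b)" for a b u
    proof -
      have bG: "b \<in> cg_g2 G t" and bz: "pre_pure G z ?d b t = pre1k G k z t"
        using b by (auto simp: countopt_def)
      have aG: "a \<in> cg_g1 G t" using a dsup by auto
      have uS: "u \<in> cg_st G" using tr_sub[OF tS aG bG] u by auto
      have ge: "\<Delta> \<le> pre_pure G D ?d b t" using dec[OF bG] bz eq2 wt by simp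
      have "pre_pure G (\<lambda>u. \<Delta> + (-1) * D u) ?d b t = \<Delta> - pre_pure G D ?d b t"
        unfolding pre_pure_add pre_pure_cmult pre_pure_const[OF tS dsup bG] by simp
      then have le0: "pre_pure G (\<lambda>u. \<Delta> + (-1) * D u) ?d b t \<le> 0" using ge by simp
      have "\<Delta> + (-1) * D u = 0"
        by (rule pre_pure_zero[OF tS _ le0 a aG u uS]) (use Dle in auto)
      then show "u \<in> Z" using uS by (simp add: Z_def)
    qed
    show ?thesis using tF tW opt succ by blast
  qed
  define H where "H = TB G k z"
  define Fb where "Fb = TB_F G k z F"
  define P2z where "P2z t = P2 t (set_pmf (\<xi> t)) (countopt G k z t (\<xi> t))" for t
  define \<sigma> where "\<sigma> u = (case u of P1 t \<Rightarrow> (if t \<in> Z then P2z t else (SOME x. x \<in> tb_succ G k z (P1 t))) | _ \<Rightarrow> u)" for u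
  define Inv where "Inv = P1 ` Z \<union> P2z ` Z \<union> {Rnd t (set_pmf (\<xi> t)) b | t b. t \<in> Z \<and> b \<in> countopt G k z t (\<xi> t)}"
  have ZS: "Z \<subseteq> cg_st G" by (auto simp: Z_def)
  have osc: "t \<in> Z \<Longrightarrow> (set_pmf (\<xi> t), countopt G k z t (\<xi> t)) \<in> optselcount G k z t" for t
    using key by (auto simp: optselcount_def)
  have InvS: "Inv \<subseteq> cg_st H"
    using ZS osc unfolding Inv_def H_def P2z_def by (auto simp: tb_states_def)
  have InvF: "Inv \<subseteq> Fb"
    using InvS key unfolding Inv_def Fb_def H_def TB_F_def P2z_def by auto
  have Invtr: "\<forall>u\<in>Inv. \<forall>a\<in>set_pmf (return_pmf (\<sigma> u)). \<forall>b\<in>cg_g2 H u. set_pmf (cg_tr H u a b) \<subseteq> Inv"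
  proof (intro ballI)
    fix u a b assume u: "u \<in> Inv" and a: "a \<in> set_pmf (return_pmf (\<sigma> u))" and b: "b \<in> cg_g2 H u"
    show "set_pmf (cg_tr H u a b) \<subseteq> Inv"
    proof (cases u)
      case (P1 t)
      then have tZ: "t \<in> Z" using u by (auto simp: Inv_def P2z_def)
      then have "a = P2z t" using a P1 by (simp add: \<sigma>_def)
      then show ?thesis using P1 tZ by (simp add: H_def Inv_def)
    next
      case (P2 t A B)
      then have tZ: "t \<in> Z" and A: "A = set_pmf (\<xi> t)" and B: "B = countopt G k z t (\<xi> t)"
        using u by (auto simp: Inv_def P2z_def)
      from b P2 obtain b' where "b = Rnd t A b'" "b' \<in> B" by (auto simp: H_def)
      then show ?thesis using P2 tZ A B by (auto simp: H_def Inv_def)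
    next
      case (Rnd t A c)
      then have tZ: "t \<in> Z" and A: "A = set_pmf (\<xi> t)" and c: "c \<in> countopt G k z t (\<xi> t)"
        using u by (auto simp: Inv_def P2z_def)
      have tS: "t \<in> cg_st G" using tZ ZS by auto
      have cG: "c \<in> cg_g2 G t" using c by (auto simp: countopt_def)
      have Asub: "A \<subseteq> cg_g1 G t" using A sel tS by (auto simp: selector_def)
      have UN: "(\<Union>a\<in>A. set_pmf (cg_tr G t a c)) \<subseteq> cg_st G"
        using Asub tr_sub[OF tS _ cG] by blast
      have succ: "tb_succ G k z u = P1 ` (\<Union>a\<in>A. set_pmf (cg_tr G t a c))" using Rnd by simp
      have fin: "finite (tb_succ G k z u)"
        unfolding succ by (intro finite_imageI finite_subset[OF UN finS])
      obtain a0 where a0: "a0 \<in> A" using A set_pmf_not_empty[of "\<xi> t"] by blast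
      obtain t0 where "t0 \<in> set_pmf (cg_tr G t a0 c)" using set_pmf_not_empty[of "cg_tr G t a0 c"] by blast
      then have ne: "tb_succ G k z u \<noteq> {}" unfolding succ using a0 by blast
      have "tb_succ G k z u \<subseteq> Inv"
        unfolding succ using key[OF tZ] A c unfolding Inv_def by blast
      then show ?thesis using Rnd fin ne by (simp add: H_def)
    qed
  qed
  have \<sigma>strat: "memoryless (\<lambda>u. return_pmf (\<sigma> u)) \<in> strategies1 H"
    unfolding strategies1_def memoryless_def
  proof (clarify)
    fix h x assume h: "h \<noteq> []" "last h \<in> cg_st H" and x: "x \<in> set_pmf (return_pmf (\<sigma> (last h)))"
    show "x \<in> cg_g1 H (last h)"
    proof (cases "last h")
      case (P1 t)
      then have tS: "t \<in> cg_st G" using h by (auto simp: H_def tb_states_def)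
      show ?thesis
      proof (cases "t \<in> Z")
        case True
        then have "x = P2z t" using x P1 by (simp add: \<sigma>_def)
        then show ?thesis using P1 osc[OF True] by (auto simp: H_def P2z_def)
      next
        case False
        have ne: "tb_succ G k z (P1 t) \<noteq> {}" by (rule tb_succ_P1_ne[OF k1 tS])
        have "(SOME x. x \<in> tb_succ G k z (P1 t)) \<in> tb_succ G k z (P1 t)" by (rule some_in_eq[THEN iffD2, OF ne])
        then show ?thesis using x P1 False by (simp add: H_def \<sigma>_def del: tb_succ.simps)
      qed
    next
      case (P2 t A B) then show ?thesis using x by (simp add: H_def \<sigma>_def)
    next
      case (Rnd t A B) then show ?thesis using x by (simp add: H_def \<sigma>_def)
    qed
  qed
  have "P1 s0 \<in> as_win H Fb"
    unfolding as_win_def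
  proof (intro CollectI conjI bexI[OF _ \<sigma>strat] ballI)
    show "P1 s0 \<in> cg_st H" using InvS s0 by (auto simp: Inv_def)
    fix \<pi>2 assume "\<pi>2 \<in> strategies2 H"
    then show "prob_safe H (memoryless (\<lambda>u. return_pmf (\<sigma> u))) \<pi>2 Fb (P1 s0) = 1"
      using inv_safe[OF InvS InvF Invtr] s0 by (auto simp: Inv_def)
  qed
  then have "s0 \<in> W1 G F" using noU s0 ZS unfolding H_def Fb_def by auto
  then show False using key[OF s0] by simp
qed


lemma as_win_succ:
  assumes pas: "pure_as_strategy (TB G k z) (TB_F G k z F) \<sigma>"
    and sS: "s \<in> cg_st G"
    and win: "P1 s \<in> as_win (TB G k z) (TB_F G k z F)"
    and \<sigma>s: "\<sigma> (P1 s) = P2 s A B" and bB: "b \<in> B" and aA: "a \<in> A"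
    and t: "t \<in> set_pmf (cg_tr G s a b)"
  shows "P1 t \<in> as_win (TB G k z) (TB_F G k z F)"
proof -
  define H where "H = TB G k z"
  define Fb where "Fb = TB_F G k z F"
  define \<sigma>m where "\<sigma>m = (\<lambda>h. return_pmf (\<sigma> (last h)))"
  have P1s: "P1 s \<in> cg_st H" using sS by (auto simp: H_def tb_states_def)
  have "\<sigma> (P1 s) \<in> cg_g1 H (P1 s)" using pas P1s by (auto simp: pure_as_strategy_def H_def)
  then have AB: "(A, B) \<in> optselcount G k z s" using \<sigma>s by (auto simp: H_def)
  then obtain d where d: "d \<in> optsel G k z s" "A = set_pmf d" "B = countopt G k z s d"
    by (auto simp: optselcount_def)
  have Asub: "A \<subseteq> cg_g1 G s" using d by (auto simp: optsel_def)
  have bG: "b \<in> cg_g2 G s" using d bB by (auto simp: countopt_def)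
  have aG: "a \<in> cg_g1 G s" using Asub aA by auto
  have tS: "t \<in> cg_st G" using tr_sub[OF sS aG bG] t by auto
  define succ where "succ = tb_succ G k z (Rnd s A b)"
  have succ_eq: "succ = P1 ` (\<Union>a\<in>A. set_pmf (cg_tr G s a b))" by (simp add: succ_def)
  have UN: "(\<Union>a\<in>A. set_pmf (cg_tr G s a b)) \<subseteq> cg_st G"
    using Asub tr_sub[OF sS _ bG] by blast
  have finsucc: "finite succ" unfolding succ_eq by (intro finite_imageI finite_subset[OF UN finS])
  have tsucc: "P1 t \<in> succ" unfolding succ_eq using aA t by blast
  have nesucc: "succ \<noteq> {}" using tsucc by blast
  have \<sigma>m_strat: "\<sigma>m \<in> strategies1 H"
    using pas unfolding pure_as_strategy_def strategies1_def \<sigma>m_def H_def by auto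
  have all1: "prob_safe H \<sigma>m \<pi>2' Fb (P1 t) = 1" if \<pi>2': "\<pi>2' \<in> strategies2 H" for \<pi>2'
  proof (rule ccontr)
    assume ne1: "prob_safe H \<sigma>m \<pi>2' Fb (P1 t) \<noteq> 1"
    then have "prob_safe H \<sigma>m \<pi>2' Fb (P1 t) < 1" using prob_safe_le1[of H \<sigma>m \<pi>2' Fb "P1 t"] by simp
    from prob_safe_approx[OF this] obtain N where "\<forall>n\<ge>N. Pn H \<sigma>m \<pi>2' Fb (P1 t) n < 1" by blast
    then have N: "Pn H \<sigma>m \<pi>2' Fb (P1 t) N < 1" by simp
    define \<pi>2 where "\<pi>2 h = (if h = [P1 s, P2 s A B] then return_pmf (Rnd s A b)
        else if length h \<ge> 4 \<and> take 3 h = [P1 s, P2 s A B, Rnd s A b] then \<pi>2' (drop 3 h) else \<pi>2' h)" for h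
    have \<pi>2s: "\<pi>2 \<in> strategies2 H"
      unfolding strategies2_def
    proof (clarify)
      fix h x assume h: "h \<noteq> []" "last h \<in> cg_st H" and x: "x \<in> set_pmf (\<pi>2 h)"
      show "x \<in> cg_g2 H (last h)"
      proof (cases "h = [P1 s, P2 s A B]")
        case True then show ?thesis using x bB by (auto simp: \<pi>2_def H_def)
      next
        case F1: False
        show ?thesis
        proof (cases "length h \<ge> 4 \<and> take 3 h = [P1 s, P2 s A B, Rnd s A b]")
          case True
          then have "drop 3 h \<noteq> []" "last (drop 3 h) = last h" by auto
          then show ?thesis using x F1 True h strat2_at[OF \<pi>2', of "drop 3 h"] by (auto simp: \<pi>2_def)
        next
          case False
          then show ?thesis using x F1 h strat2_at[OF \<pi>2', of h] by (auto simp: \<pi>2_def)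
        qed
      qed
    qed
    have c1: "(\<integral>x. f x \<partial>measure_pmf p) = c" if "\<And>x. x \<in> set_pmf p \<Longrightarrow> f x = c" for f :: "_ \<Rightarrow> real" and p c
      using int_pmf_cong[of p f "\<lambda>_. c"] that by simp
    have e1: "Pn H \<sigma>m \<pi>2 Fb (P1 s) (Suc (Suc (Suc N))) \<le>
              Pn H (\<lambda>h. \<sigma>m (P1 s # h)) (\<lambda>h. \<pi>2 (P1 s # h)) Fb (P2 s A B) (Suc (Suc N))"
      unfolding Pn_Suc[of H \<sigma>m \<pi>2 Fb "P1 s" "Suc (Suc N)"]
      by (simp add: \<sigma>m_def \<sigma>s H_def Pn_nonneg c1)
    have e2: "Pn H (\<lambda>h. \<sigma>m (P1 s # h)) (\<lambda>h. \<pi>2 (P1 s # h)) Fb (P2 s A B) (Suc (Suc N)) \<le>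
              Pn H (\<lambda>h. \<sigma>m (P1 s # P2 s A B # h)) (\<lambda>h. \<pi>2 (P1 s # P2 s A B # h)) Fb (Rnd s A b) (Suc N)"
      unfolding Pn_Suc[of H "\<lambda>h. \<sigma>m (P1 s # h)" _ Fb "P2 s A B" "Suc N"]
      by (simp add: \<pi>2_def H_def Pn_nonneg c1)
    have shift3: "Pn H (\<lambda>h. \<sigma>m (P1 s # P2 s A B # Rnd s A b # h)) (\<lambda>h. \<pi>2 (P1 s # P2 s A B # Rnd s A b # h)) Fb u N
        = Pn H \<sigma>m \<pi>2' Fb u N" for u
      unfolding Pn_def by (rule arg_cong[where f="\<lambda>p. measure_pmf.prob p _"], rule hist_cong)
        (auto simp: \<sigma>m_def \<pi>2_def neq_Nil_conv)
    have e3: "Pn H (\<lambda>h. \<sigma>m (P1 s # P2 s A B # h)) (\<lambda>h. \<pi>2 (P1 s # P2 s A B # h)) Fb (Rnd s A b) (Suc N)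
        \<le> (\<Sum>u\<in>succ. Pn H \<sigma>m \<pi>2' Fb u N) / card succ"
    proof -
      have "(\<Sum>u\<in>succ. Pn H \<sigma>m \<pi>2' Fb u N) / card succ \<ge> 0"
        by (intro divide_nonneg_nonneg sum_nonneg Pn_nonneg) simp
      moreover have "(\<integral>x. Pn H (\<lambda>h. \<sigma>m (P1 s # P2 s A B # Rnd s A b # h)) (\<lambda>h. \<pi>2 (P1 s # P2 s A B # Rnd s A b # h)) Fb x N \<partial>measure_pmf (pmf_of_set succ))
          = (\<Sum>u\<in>succ. Pn H \<sigma>m \<pi>2' Fb u N) / card succ"
        unfolding shift3 by (rule integral_pmf_of_set[OF nesucc finsucc])
      ultimately show ?thesis
        unfolding Pn_Suc[of H "\<lambda>h. \<sigma>m (P1 s # P2 s A B # h)" _ Fb "Rnd s A b" N]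
        by (simp add: H_def c1 succ_def[symmetric] del: tb_succ.simps)
    qed
    have "(\<Sum>u\<in>succ. Pn H \<sigma>m \<pi>2' Fb u N) < (\<Sum>u\<in>succ. 1)"
      using finsucc tsucc N by (intro sum_strict_mono_ex1) (auto simp: Pn_le1)
    then have "(\<Sum>u\<in>succ. Pn H \<sigma>m \<pi>2' Fb u N) / card succ < 1"
      using finsucc nesucc by (simp add: card_gt_0_iff)
    then have "prob_safe H \<sigma>m \<pi>2 Fb (P1 s) < 1"
      using prob_safe_le[of H \<sigma>m \<pi>2 Fb "P1 s" "Suc (Suc (Suc N))"] e1 e2 e3 by linarith
    moreover have "prob_safe H \<sigma>m \<pi>2 Fb (P1 s) = 1"
      using pas win \<pi>2s unfolding pure_as_strategy_def H_def Fb_def \<sigma>m_def by blast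
    ultimately show False by simp
  qed
  show ?thesis
    unfolding as_win_def
  proof (intro CollectI conjI bexI[of _ "memoryless (\<lambda>u. return_pmf (\<sigma> u))"] ballI)
    show "P1 t \<in> cg_st (TB G k z)" using tS by (auto simp: tb_states_def)
    show "memoryless (\<lambda>u. return_pmf (\<sigma> u)) \<in> strategies1 (TB G k z)"
      using \<sigma>m_strat by (simp add: \<sigma>m_def memoryless_def H_def)
    fix \<pi>2 assume "\<pi>2 \<in> strategies2 (TB G k z)"
    then show "prob_safe (TB G k z) (memoryless (\<lambda>u. return_pmf (\<sigma> u))) \<pi>2 (TB_F G k z F) (P1 t) = 1"
      using all1[of \<pi>2] by (simp add: \<sigma>m_def memoryless_def H_def Fb_def)
  qed
qed


lemma pre_pure_cong_supp:
  assumes "\<And>a t. a \<in> set_pmf d \<Longrightarrow> a \<in> cg_g1 G s \<Longrightarrow> t \<in> set_pmf (cg_tr G s a b) \<Longrightarrow> t \<in> cg_st G \<Longrightarrow> f t = g t"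
  shows "pre_pure G f d b s = pre_pure G g d b s"
  unfolding pre_pure_def
proof (intro sum.cong refl)
  fix a t assume a: "a \<in> cg_g1 G s" and t: "t \<in> cg_st G"
  show "f t * pmf (cg_tr G s a b) t * pmf d a = g t * pmf (cg_tr G s a b) t * pmf d a"
    using assms[OF _ a _ t] by (cases "a \<in> set_pmf d"; cases "t \<in> set_pmf (cg_tr G s a b)") (auto simp: set_pmf_iff)
qed

lemma pre1k_le1:
  assumes k1: "k \<ge> 1" and s: "s \<in> cg_st G" and z1: "\<forall>t\<in>cg_st G. z t \<le> 1"
  shows "pre1k G k z s \<le> 1"
proof -
  obtain d where d: "d \<in> K k s" "pre1_sel G z d s = pre1k G k z s" using pre1k_attained[OF k1 s] by blast
  obtain b where b: "b \<in> cg_g2 G s" using g2_ne[OF s] by blast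
  have dsup: "set_pmf d \<subseteq> cg_g1 G s" using d by (auto simp: K_def)
  have "pre1k G k z s \<le> pre_pure G z d b s" using d pre1_sel_le[OF s b] by metis
  also have "\<dots> \<le> pre_pure G (\<lambda>_. 1) d b s" using z1 by (intro pre_pure_mono) auto
  also have "\<dots> = 1" by (rule pre_pure_const[OF s dsup b])
  finally show ?thesis .
qed

lemma z_props:
  assumes sel: "selector G \<gamma>"
  shows "\<forall>t\<in>cg_st G. 0 \<le> val1_strat G (memoryless \<gamma>) F t \<and> val1_strat G (memoryless \<gamma>) F t \<le> 1"
    and "\<forall>t\<in>cg_st G - F. val1_strat G (memoryless \<gamma>) F t = 0"
  using val_nonneg val_le1 val_notin by auto

lemma caseA:
  assumes k1: "k \<ge> 1" and sel: "selector G \<gamma>" and sel': "selector G \<gamma>'"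
    and zdef: "z = val1_strat G (memoryless \<gamma>) F"
    and Ine: "improve_set G F k z \<noteq> {}"
    and out: "\<forall>s. s \<notin> improve_set G F k z \<longrightarrow> \<gamma>' s = \<gamma> s"
    and inI: "\<forall>s\<in>improve_set G F k z. \<gamma>' s \<in> optsel G k z s"
  shows "\<exists>s\<in>cg_st G. z s < val1_strat G (memoryless \<gamma>') F s"
proof -
  define I where "I = improve_set G F k z"
  have IS: "I \<subseteq> cg_st G" and IF: "I \<subseteq> F" by (auto simp: I_def improve_set_def)
  have Igt: "s \<in> I \<Longrightarrow> z s < pre1k G k z s" for s by (auto simp: I_def improve_set_def)
  have finI: "finite I" using IS finS finite_subset by blast
  define g where "g = Min ((\<lambda>s. pre1k G k z s - z s) ` I)"
  have gle: "s \<in> I \<Longrightarrow> g \<le> pre1k G k z s - z s" for s unfolding g_def using finI by (intro Min_le) auto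
  have gpos: "0 < g"
    unfolding g_def using finI Ine Igt by (subst Min_gr_iff) (auto simp: I_def)
  obtain s0 where s0: "s0 \<in> I" using Ine by (auto simp: I_def)
  have z01: "\<forall>t\<in>cg_st G. 0 \<le> z t \<and> z t \<le> 1" and z0: "\<forall>t\<in>cg_st G - F. z t = 0"
    using z_props[OF sel] zdef by auto
  define v where "v t = z t + (if t \<in> I then g else 0)" for t
  have vz: "\<forall>t\<in>cg_st G. z t \<le> v t" using gpos by (auto simp: v_def)
  have "v s0 \<le> val1_strat G (memoryless \<gamma>') F s0"
  proof (rule M1[OF sel'])
    show "\<forall>t\<in>cg_st G. 0 \<le> v t \<and> v t \<le> 1"
    proof
      fix t assume t: "t \<in> cg_st G"
      show "0 \<le> v t \<and> v t \<le> 1"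
        using z01 t gpos gle[of t] pre1k_le1[OF k1 t, of z] by (auto simp: v_def)
    qed
    show "\<forall>t\<in>cg_st G - F. v t = 0" using z0 IF by (auto simp: v_def)
    show "\<forall>s\<in>cg_st G \<inter> F. \<forall>b\<in>cg_g2 G s. v s \<le> pre_pure G v (\<gamma>' s) b s"
    proof (intro ballI)
      fix s b assume s: "s \<in> cg_st G \<inter> F" and b: "b \<in> cg_g2 G s"
      have mono: "pre_pure G z (\<gamma>' s) b s \<le> pre_pure G v (\<gamma>' s) b s" using vz by (intro pre_pure_mono)
      show "v s \<le> pre_pure G v (\<gamma>' s) b s"
      proof (cases "s \<in> I")
        case True
        have "v s \<le> pre1k G k z s" using gle[OF True] by (simp add: v_def True)
        also have "\<dots> = pre1_sel G z (\<gamma>' s) s" using inI True by (auto simp: I_def optsel_def)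
        also have "\<dots> \<le> pre_pure G z (\<gamma>' s) b s" using pre1_sel_le s b by auto
        finally show ?thesis using mono by linarith
      next
        case False
        have "v s = z s" using False by (simp add: v_def)
        also have "\<dots> \<le> pre_pure G z (\<gamma> s) b s" using M2[OF sel _ _ b] s zdef by auto
        also have "\<dots> = pre_pure G z (\<gamma>' s) b s" using out False by (simp add: I_def)
        finally show ?thesis using mono by linarith
      qed
    qed
  qed (use s0 IS in auto)
  then have "z s0 < val1_strat G (memoryless \<gamma>') F s0" using s0 gpos by (simp add: v_def)
  then show ?thesis using s0 IS by blast
qed

lemma caseB:
  assumes k1: "k \<ge> 1" and sel: "selector G \<gamma>" and sel': "selector G \<gamma>'"
    and ku: "kunif_selector G F k \<gamma>"
    and zdef: "z = val1_strat G (memoryless \<gamma>) F"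
    and noI: "improve_set G F k z = {}"
    and Udef: "U = {s \<in> cg_st G. P1 s \<in> as_win (TB G k z) (TB_F G k z F)} - W1 G F"
    and Une: "U \<noteq> {}"
    and pas: "pure_as_strategy (TB G k z) (TB_F G k z F) \<sigma>"
    and out: "\<forall>s. s \<notin> U \<longrightarrow> \<gamma>' s = \<gamma> s"
    and inU: "\<forall>s\<in>U. \<exists>A B. \<sigma> (P1 s) = P2 s A B \<and> \<gamma>' s \<in> optsel G k z s \<and>
                           set_pmf (\<gamma>' s) = A \<and> countopt G k z s (\<gamma>' s) = B"
    and z1: "\<forall>t\<in>W1 G F. z t = 1"
    and zlt: "\<forall>t\<in>cg_st G - W1 G F. z t < 1"
  shows "\<exists>s\<in>cg_st G. z s < val1_strat G (memoryless \<gamma>') F s"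
proof -
  have US: "U \<subseteq> cg_st G" using Udef by auto
  have UF: "U \<subseteq> F"
  proof
    fix s assume "s \<in> U"
    then have "P1 s \<in> TB_F G k z F" using Udef as_win_F by blast
    then show "s \<in> F" by (simp add: TB_F_def)
  qed
  have UW: "s \<in> U \<Longrightarrow> s \<notin> W1 G F" for s using Udef by auto
  have z01: "\<forall>t\<in>cg_st G. 0 \<le> z t \<and> z t \<le> 1" and z0: "\<forall>t\<in>cg_st G - F. z t = 0"
    using z_props[OF sel] zdef by auto
  have fix_: "pre1k G k z s = z s" if s: "s \<in> U" for s
  proof -
    have sS: "s \<in> cg_st G" using s US by auto
    have r: "s \<in> cg_st G - (W1 G F \<union> (cg_st G - F))" using s US UF UW by auto
    have "pre1k G k z s \<le> z s" using noI r by (auto simp: improve_set_def)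
    moreover have "z s \<le> pre1_sel G z (\<gamma> s) s"
      using M2[OF sel sS] zdef s UF by (intro pre1_sel_ge[OF sS]) auto
    moreover have "\<gamma> s \<in> K k s" using ku sel r sS by (auto simp: K_def kunif_selector_def selector_def)
    then have "pre1_sel G z (\<gamma> s) s \<le> pre1k G k z s" by (rule pre1k_ge[OF sS])
    ultimately show ?thesis by linarith
  qed
  have clos: "t \<in> U \<or> t \<in> W1 G F"
    if s: "s \<in> U" and b: "b \<in> countopt G k z s (\<gamma>' s)" and a: "a \<in> set_pmf (\<gamma>' s)"
      and t: "t \<in> set_pmf (cg_tr G s a b)" for s a b t
  proof -
    have sS: "s \<in> cg_st G" using s US by auto
    obtain A B where AB: "\<sigma> (P1 s) = P2 s A B" "set_pmf (\<gamma>' s) = A" "countopt G k z s (\<gamma>' s) = B"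
      using inU s by blast
    have win: "P1 s \<in> as_win (TB G k z) (TB_F G k z F)" using s Udef by auto
    have tw: "P1 t \<in> as_win (TB G k z) (TB_F G k z F)"
      using as_win_succ[OF pas sS win AB(1), of b a t] AB b a t by auto
    have "t \<in> cg_st G" using as_win_st[OF tw] by (auto simp: tb_states_def)
    then show ?thesis using tw Udef by auto
  qed
  define PS where "PS = Sigma U (\<lambda>s. cg_g2 G s - countopt G k z s (\<gamma>' s))"
  have finPS: "finite PS" unfolding PS_def
    using US finS fin2 by (intro finite_SigmaI) (auto intro: finite_subset)
  define g where "g = Min (insert 1 ((\<lambda>(s,b). pre_pure G z (\<gamma>' s) b s - pre1k G k z s) ` PS))"
  have gle1: "g \<le> 1" unfolding g_def using finPS by (intro Min_le) auto
  have glePS: "g \<le> pre_pure G z (\<gamma>' s) b s - pre1k G k z s" if "(s,b) \<in> PS" for s b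
    unfolding g_def using finPS that by (intro Min_le) (auto intro!: image_eqI[where x="(s,b)"])
  have gpos: "0 < g"
    unfolding g_def
  proof (subst Min_gr_iff)
    show "finite (insert 1 ((\<lambda>(s,b). pre_pure G z (\<gamma>' s) b s - pre1k G k z s) ` PS))" using finPS by simp
    show "\<forall>x\<in>insert 1 ((\<lambda>(s,b). pre_pure G z (\<gamma>' s) b s - pre1k G k z s) ` PS). 0 < x"
    proof clarsimp
      fix s b assume "(s,b) \<in> PS"
      then have s: "s \<in> U" and b: "b \<in> cg_g2 G s" and nb: "b \<notin> countopt G k z s (\<gamma>' s)" by (auto simp: PS_def)
      have sS: "s \<in> cg_st G" using s US by auto
      have "pre1k G k z s = pre1_sel G z (\<gamma>' s) s" using inU s by (auto simp: optsel_def)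
      also have "\<dots> \<le> pre_pure G z (\<gamma>' s) b s" by (rule pre1_sel_le[OF sS b])
      finally have "pre1k G k z s \<le> pre_pure G z (\<gamma>' s) b s" .
      moreover have "pre_pure G z (\<gamma>' s) b s \<noteq> pre1k G k z s" using nb b by (simp add: countopt_def)
      ultimately show "pre1k G k z s < pre_pure G z (\<gamma>' s) b s" by simp
    qed
  qed simp
  obtain s0 where s0: "s0 \<in> U" using Une by blast
  define f where "f t = (if t \<in> U then 1 - z t else 0)" for t
  define v where "v t = z t + g * f t" for t
  have f01: "t \<in> cg_st G \<Longrightarrow> 0 \<le> f t \<and> f t \<le> 1 - z t" for t using z01 by (auto simp: f_def)
  have vz: "\<forall>t\<in>cg_st G. z t \<le> v t" using f01 gpos by (auto simp: v_def)
  have "v s0 \<le> val1_strat G (memoryless \<gamma>') F s0"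
  proof (rule M1[OF sel'])
    show "\<forall>t\<in>cg_st G. 0 \<le> v t \<and> v t \<le> 1"
    proof
      fix t assume t: "t \<in> cg_st G"
      have "g * f t \<le> 1 * (1 - z t)" using f01[OF t] gle1 gpos by (intro mult_mono) auto
      then show "0 \<le> v t \<and> v t \<le> 1" using z01 t f01[OF t] gpos by (auto simp: v_def)
    qed
    show "\<forall>t\<in>cg_st G - F. v t = 0" using z0 UF by (auto simp: v_def f_def)
    show "\<forall>s\<in>cg_st G \<inter> F. \<forall>b\<in>cg_g2 G s. v s \<le> pre_pure G v (\<gamma>' s) b s"
    proof (intro ballI)
      fix s b assume s: "s \<in> cg_st G \<inter> F" and b: "b \<in> cg_g2 G s"
      have sS: "s \<in> cg_st G" using s by auto
      have mono: "pre_pure G z (\<gamma>' s) b s \<le> pre_pure G v (\<gamma>' s) b s" using vz by (intro pre_pure_mono)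
      have dsup: "set_pmf (\<gamma>' s) \<subseteq> cg_g1 G s" using sel' sS by (auto simp: selector_def)
      show "v s \<le> pre_pure G v (\<gamma>' s) b s"
      proof (cases "s \<in> U")
        case False
        have "v s = z s" using False by (simp add: v_def f_def)
        also have "\<dots> \<le> pre_pure G z (\<gamma> s) b s" using M2[OF sel _ _ b] s zdef by auto
        also have "\<dots> = pre_pure G z (\<gamma>' s) b s" using out False by simp
        finally show ?thesis using mono by linarith
      next
        case sU: True
        show ?thesis
        proof (cases "b \<in> countopt G k z s (\<gamma>' s)")
          case True
          have pz: "pre_pure G z (\<gamma>' s) b s = z s" using True fix_[OF sU] by (simp add: countopt_def)
          have "pre_pure G f (\<gamma>' s) b s = pre_pure G (\<lambda>t. 1 + (-1) * z t) (\<gamma>' s) b s"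
          proof (rule pre_pure_cong_supp)
            fix a t assume a: "a \<in> set_pmf (\<gamma>' s)" and t: "t \<in> set_pmf (cg_tr G s a b)"
            show "f t = 1 + (-1) * z t" using clos[OF sU True a t] z1 by (auto simp: f_def)
          qed
          also have "\<dots> = 1 - z s" unfolding pre_pure_add pre_pure_cmult pre_pure_const[OF sS dsup b] pz by simp
          finally have "pre_pure G v (\<gamma>' s) b s = z s + g * (1 - z s)"
            unfolding v_def pre_pure_add pre_pure_cmult pz by simp
          then show ?thesis using sU by (simp add: v_def f_def)
        next
          case False
          then have "(s, b) \<in> PS" using sU b by (auto simp: PS_def)
          from glePS[OF this] fix_[OF sU] have "z s + g \<le> pre_pure G z (\<gamma>' s) b s" by simp
          moreover have "g * f s \<le> g" using f01[OF sS] z01 sS gpos by (auto intro: mult_left_le)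
          ultimately show ?thesis using mono by (simp add: v_def)
        qed
      qed
    qed
  qed (use s0 US in auto)
  moreover have "z s0 < v s0"
    using s0 US UW zlt gpos by (auto simp: v_def f_def)
  ultimately show ?thesis using s0 US by force
qed


lemma W1_sub_F:
  assumes sel: "selector G \<xi>"
  shows "W1 G F \<subseteq> F"
proof
  fix t assume t: "t \<in> W1 G F"
  show "t \<in> F"
  proof (rule ccontr)
    assume tF: "t \<notin> F"
    have "val1 G F t = (SUP \<pi>1\<in>strategies1 G. (0::real))"
      unfolding val1_def by (intro SUP_cong refl) (simp add: val_notin tF)
    also have "\<dots> = 0" using memoryless_strat1[OF sel] by (intro cSUP_const) blast
    finally show False using t by (simp add: W1_def)
  qed
qed

lemma val1_ge: "selector G \<xi> \<Longrightarrow> val1_strat G (memoryless \<xi>) F t \<le> val1 G F t"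
  unfolding val1_def using memoryless_strat1 val_le1
  by (intro cSUP_upper bdd_aboveI[where M=1]) auto

lemma val1_le1: "selector G \<xi> \<Longrightarrow> val1 G F t \<le> 1"
  unfolding val1_def using memoryless_strat1 val_le1
  by (intro cSUP_least) auto

lemma W1_val:
  assumes sel: "selector G \<xi>"
    and abs: "\<forall>s \<in> W1 G F. \<forall>a\<in>cg_g1 G s. \<forall>b\<in>cg_g2 G s. cg_tr G s a b = return_pmf s"
    and t: "t \<in> W1 G F"
  shows "val1_strat G (memoryless \<xi>) F t = 1"
proof (rule antisym)
  show "val1_strat G (memoryless \<xi>) F t \<le> 1" by (rule val_le1)
  define v where "v u = (if u \<in> W1 G F then 1 else (0::real))" for u
  have tS: "t \<in> cg_st G" using t by (simp add: W1_def)
  have "v t \<le> val1_strat G (memoryless \<xi>) F t"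
  proof (rule M1[OF sel _ _ _ tS])
    show "\<forall>u\<in>cg_st G. 0 \<le> v u \<and> v u \<le> 1" by (simp add: v_def)
    show "\<forall>u\<in>cg_st G - F. v u = 0" using W1_sub_F[OF sel] by (auto simp: v_def)
    show "\<forall>s\<in>cg_st G \<inter> F. \<forall>b\<in>cg_g2 G s. v s \<le> pre_pure G v (\<xi> s) b s"
    proof (intro ballI)
      fix s b assume s: "s \<in> cg_st G \<inter> F" and b: "b \<in> cg_g2 G s"
      have sS: "s \<in> cg_st G" using s by auto
      have dsup: "set_pmf (\<xi> s) \<subseteq> cg_g1 G s" using sel sS by (auto simp: selector_def)
      show "v s \<le> pre_pure G v (\<xi> s) b s"
      proof (cases "s \<in> W1 G F")
        case True
        have "pre_pure G v (\<xi> s) b s = pre_pure G (\<lambda>_. 1) (\<xi> s) b s"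
          by (rule pre_pure_cong_supp) (use abs True b in \<open>auto simp: v_def\<close>)
        also have "\<dots> = 1" by (rule pre_pure_const[OF sS dsup b])
        finally show ?thesis by (simp add: v_def True)
      next
        case False
        have "pre_pure G (\<lambda>_. 0) (\<xi> s) b s \<le> pre_pure G v (\<xi> s) b s"
          by (intro pre_pure_mono) (auto simp: v_def)
        then show ?thesis using False pre_pure_const[OF sS dsup b, of 0] by (simp add: v_def)
      qed
    qed
  qed
  then show "1 \<le> val1_strat G (memoryless \<xi>) F t" using t by (simp add: v_def)
qed

lemma kunif_uniform:
  assumes s: "s \<in> cg_st G" and kk: "card (cg_mv G) \<le> k"
  shows "kunif_dist k (pmf_of_set (cg_g1 G s))"
  unfolding kunif_dist_def
proof
  fix a
  have fin: "finite (cg_g1 G s)" and ne: "cg_g1 G s \<noteq> {}" using fin1[OF s] g1_ne[OF s] .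
  have c1: "card (cg_g1 G s) \<ge> 1" using fin ne by (simp add: Suc_le_eq card_gt_0_iff)
  have ck: "card (cg_g1 G s) \<le> k" using card_mono[OF finM g1_sub[OF s]] kk by simp
  show "\<exists>i j. i \<le> j \<and> j \<le> k \<and> pmf (pmf_of_set (cg_g1 G s)) a = real i / real j"
  proof (cases "a \<in> cg_g1 G s")
    case True
    then show ?thesis using fin ne c1 ck by (intro exI[where x=1] exI[where x="card (cg_g1 G s)"]) auto
  next
    case False
    then show ?thesis using fin ne c1 ck by (intro exI[where x=0] exI[where x="card (cg_g1 G s)"]) auto
  qed
qed

lemma run_inv:
  assumes run: "alg_run G F k \<gamma>"
  shows "selector G (\<gamma> j) \<and> kunif_selector G F (max k (card (cg_mv G))) (\<gamma> j)"
proof (induction j)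
  case 0
  have "\<gamma> 0 = (\<lambda>s. pmf_of_set (cg_g1 G s))" using run by (simp add: alg_run_def)
  then show ?case
    using fin1 g1_ne kunif_uniform[of _ "max k (card (cg_mv G))"]
    by (auto simp: selector_def kunif_selector_def)
next
  case (Suc j)
  let ?k = "max k (card (cg_mv G))"
  have step: "alg_step G F ?k (\<gamma> j) (\<gamma> (Suc j))" using run by (simp add: alg_run_def)
  have good: "set_pmf (\<gamma> (Suc j) s) \<subseteq> cg_g1 G s \<and> kunif_dist ?k (\<gamma> (Suc j) s)"
    if "\<gamma> (Suc j) s \<noteq> \<gamma> j s" for s
    using step that unfolding alg_step_def Let_def optsel_def by (auto split: if_splits)
  show ?case
    using Suc good unfolding selector_def kunif_selector_def by metis
qed

theorem lemma17_loc:
  fixes F :: "'s set" and k :: nat and \<gamma> :: "nat \<Rightarrow> 's \<Rightarrow> 'm pmf" and i :: nat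
  assumes "F \<subseteq> cg_st G"
    and abs: "\<forall>s \<in> W1 G F \<union> (cg_st G - F). \<forall>a\<in>cg_g1 G s. \<forall>b\<in>cg_g2 G s. cg_tr G s a b = return_pmf s"
    and k0: "k > 0"
    and run: "alg_run G F k \<gamma>"
    and eqv: "\<forall>s\<in>cg_st G. val1_strat G (memoryless (\<gamma> i)) F s = val1_strat G (memoryless (\<gamma> (Suc i))) F s"
  shows "\<forall>s\<in>cg_st G.
           (\<exists>\<xi>. selector G \<xi> \<and> kunif_selector G F (max k (card (cg_mv G))) \<xi> \<and>
                val1_strat G (memoryless \<xi>) F s = val1_strat G (memoryless (\<gamma> i)) F s) \<and>
           (\<forall>\<xi>. selector G \<xi> \<and> kunif_selector G F (max k (card (cg_mv G))) \<xi> \<longrightarrow>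
                val1_strat G (memoryless \<xi>) F s \<le> val1_strat G (memoryless (\<gamma> i)) F s)"
proof -
  define k' where "k' = max k (card (cg_mv G))"
  have k1: "k' \<ge> 1" using k0 by (simp add: k'_def)
  define z where "z = val1_strat G (memoryless (\<gamma> i)) F"
  have inv_i: "selector G (\<gamma> i)" "kunif_selector G F k' (\<gamma> i)" using run_inv[OF run, of i] by (auto simp: k'_def)
  have inv_Si: "selector G (\<gamma> (Suc i))" using run_inv[OF run, of "Suc i"] by auto
  have step: "alg_step G F k' (\<gamma> i) (\<gamma> (Suc i))" using run by (simp add: alg_run_def k'_def)
  define I where "I = improve_set G F k' z"
  define U where "U = {s \<in> cg_st G. P1 s \<in> as_win (TB G k' z) (TB_F G k' z F)} - W1 G F"
  have z1: "\<forall>t\<in>W1 G F. z t = 1" using W1_val[OF inv_i(1)] abs by (simp add: z_def)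
  have zlt: "\<forall>t\<in>cg_st G - W1 G F. z t < 1"
  proof
    fix t assume t: "t \<in> cg_st G - W1 G F"
    have "z t \<le> val1 G F t" using val1_ge[OF inv_i(1)] by (simp add: z_def)
    moreover have "val1 G F t \<le> 1" by (rule val1_le1[OF inv_i(1)])
    moreover have "val1 G F t \<noteq> 1" using t by (simp add: W1_def)
    ultimately show "z t < 1" by linarith
  qed
  have noimp: "\<not> (\<exists>s\<in>cg_st G. z s < val1_strat G (memoryless (\<gamma> (Suc i))) F s)"
    using eqv by (simp add: z_def)
  have IU: "I = {} \<and> U = {}"
  proof -
    have st: "(I \<noteq> {} \<and> (\<forall>s. s \<notin> I \<longrightarrow> \<gamma> (Suc i) s = \<gamma> i s) \<and> (\<forall>s\<in>I. \<gamma> (Suc i) s \<in> optsel G k' z s))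
      \<or> (I = {} \<and> U \<noteq> {} \<and>
           (\<exists>\<sigma>. pure_as_strategy (TB G k' z) (TB_F G k' z F) \<sigma> \<and>
                (\<forall>s. s \<notin> U \<longrightarrow> \<gamma> (Suc i) s = \<gamma> i s) \<and>
                (\<forall>s\<in>U. \<exists>A B. \<sigma> (P1 s) = P2 s A B \<and> \<gamma> (Suc i) s \<in> optsel G k' z s \<and>
                           set_pmf (\<gamma> (Suc i) s) = A \<and> countopt G k' z s (\<gamma> (Suc i) s) = B)))
      \<or> (I = {} \<and> U = {} \<and> \<gamma> (Suc i) = \<gamma> i)"
      using step unfolding alg_step_def Let_def I_def U_def z_def .
    then show ?thesis
    proof (elim disjE conjE exE)
      assume "I \<noteq> {}" "\<forall>s. s \<notin> I \<longrightarrow> \<gamma> (Suc i) s = \<gamma> i s" "\<forall>s\<in>I. \<gamma> (Suc i) s \<in> optsel G k' z s"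
      then have "\<exists>s\<in>cg_st G. z s < val1_strat G (memoryless (\<gamma> (Suc i))) F s"
        using caseA[OF k1 inv_i(1) inv_Si z_def] unfolding I_def by blast
      with noimp show ?thesis by blast
    next
      fix \<sigma>
      assume a: "I = {}" "U \<noteq> {}" "pure_as_strategy (TB G k' z) (TB_F G k' z F) \<sigma>"
        "\<forall>s. s \<notin> U \<longrightarrow> \<gamma> (Suc i) s = \<gamma> i s"
        "\<forall>s\<in>U. \<exists>A B. \<sigma> (P1 s) = P2 s A B \<and> \<gamma> (Suc i) s \<in> optsel G k' z s \<and>
                           set_pmf (\<gamma> (Suc i) s) = A \<and> countopt G k' z s (\<gamma> (Suc i) s) = B"
      have "\<exists>s\<in>cg_st G. z s < val1_strat G (memoryless (\<gamma> (Suc i))) F s"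
        by (rule caseB[OF k1 inv_i(1) inv_Si inv_i(2) z_def a(1)[unfolded I_def] U_def a(2-5) z1 zlt])
      with noimp show ?thesis by blast
    qed blast
  qed
  show ?thesis
  proof (intro ballI conjI allI impI)
    fix s assume s: "s \<in> cg_st G"
    show "\<exists>\<xi>. selector G \<xi> \<and> kunif_selector G F (max k (card (cg_mv G))) \<xi> \<and>
                val1_strat G (memoryless \<xi>) F s = val1_strat G (memoryless (\<gamma> i)) F s"
      using inv_i unfolding k'_def by blast
    fix \<xi> assume "selector G \<xi> \<and> kunif_selector G F (max k (card (cg_mv G))) \<xi>"
    then have sel: "selector G \<xi>" and ku: "kunif_selector G F k' \<xi>" by (auto simp: k'_def)
    show "val1_strat G (memoryless \<xi>) F s \<le> val1_strat G (memoryless (\<gamma> i)) F s"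
      unfolding z_def[symmetric]
    proof (rule caseC[OF k1 sel ku _ _ z1 _ _ s])
      show "\<forall>t\<in>cg_st G. 0 \<le> z t \<and> z t \<le> 1" "\<forall>t\<in>cg_st G - F. z t = 0"
        using z_props[OF inv_i(1)] by (auto simp: z_def)
      show "\<forall>s\<in>cg_st G - (W1 G F \<union> (cg_st G - F)). pre1k G k' z s \<le> z s"
        using IU unfolding I_def improve_set_def by (auto simp: not_less)
      show "\<forall>s\<in>cg_st G. P1 s \<in> as_win (TB G k' z) (TB_F G k' z F) \<longrightarrow> s \<in> W1 G F"
        using IU unfolding U_def by auto
    qed
  qed
qed

end

theorem lemma17:
  fixes G :: "('s, 'm) cgame" and F :: "'s set" and k :: nat
    and \<gamma> :: "nat \<Rightarrow> 's \<Rightarrow> 'm pmf" and i :: nat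
  assumes "wf_cgame G"
    and "F \<subseteq> cg_st G"
    and "\<forall>s \<in> W1 G F \<union> (cg_st G - F). \<forall>a\<in>cg_g1 G s. \<forall>b\<in>cg_g2 G s. cg_tr G s a b = return_pmf s"
    and "k > 0"
    and "alg_run G F k \<gamma>"
    and "\<forall>s\<in>cg_st G. val1_strat G (memoryless (\<gamma> i)) F s = val1_strat G (memoryless (\<gamma> (Suc i))) F s"
  shows "\<forall>s\<in>cg_st G.
           (\<exists>\<xi>. selector G \<xi> \<and> kunif_selector G F (max k (card (cg_mv G))) \<xi> \<and>
                val1_strat G (memoryless \<xi>) F s = val1_strat G (memoryless (\<gamma> i)) F s) \<and>
           (\<forall>\<xi>. selector G \<xi> \<and> kunif_selector G F (max k (card (cg_mv G))) \<xi> \<longrightarrow>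
                val1_strat G (memoryless \<xi>) F s \<le> val1_strat G (memoryless (\<gamma> i)) F s)"
proof -
  interpret wfg G by (rule wfg.intro) (rule assms(1))
  show ?thesis by (rule lemma17_loc[OF assms(2-6)])
qed

end
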